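(* Let $F$ be a nondyadic nonarchimedean local field with uniformizer $\pi$, maximal ideal $\mathfrak p$ and residue field $\mathfrak k$, and $A$ a quaternion $F$-algebra. Put $\varepsilon=0$ if $A$ is split, and if $A$ is ramified let $\varepsilon\in O_F^\times$ be such that $1-4\varepsilon\in O_F^\times\setminus O_F^{\times2}$. Let $\{1,x_1,x_2,x_3\}$ be an $F$-basis of $A$ with $x_1^2=x_1-\varepsilon$, $x_2^2=\pi$, $x_2x_1=(1-x_1)x_2$, $x_3=x_1x_2$. Let $n\ge3$, $r=\lfloor n/2\rfloor$, $s=\lfloor (n-1)/2\rfloor$, $\alpha\in\mathfrak p$, $\beta\in O_F$ (with $1+\beta\in O_F^\times$ if $A$ is split), $x_{\alpha\beta}=\alpha x_1+x_2+\beta x_3$, and $\mathcal O=O_F+O_Fx_{\alpha\beta}+O_F\pi^rx_1+O_F\pi^sx_3$ (a Bass order with Eichler invariant $0$ and $n(\mathcal O)=n$). Put $M=F(x_{\alpha\beta})$. Then $\mathrm{Nr}(\mathcal N(\mathcal O))=\mathrm{Nm}_{M/F}(M^\times)$ if and only if either (i) $A$ is split and $-1\in\mathfrak k^{\times2}$, or (ii) $A$ is ramified and $-1\notin\mathfrak k^{\times2}$.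
   Context: $\mathcal N(\mathcal O)$ is the normalizer of $\mathcal O$ in $A^\times$, $\mathrm{Nr}$ the reduced norm, $\mathrm{Nm}_{M/F}$ the field norm. Nondyadic means residue characteristic $\ne2$. *)

theory Defs
  imports Main
begin

text \<open>A discrete valuation v on a field; v is only meaningful on nonzero elements.\<close>

definition dval :: "('a::field \<Rightarrow> int) \<Rightarrow> bool" where
  "dval v \<longleftrightarrow>
     (\<forall>x y. x \<noteq> 0 \<longrightarrow> y \<noteq> 0 \<longrightarrow> v (x * y) = v x + v y) \<and>
     (\<forall>x y. x \<noteq> 0 \<longrightarrow> y \<noteq> 0 \<longrightarrow> x + y \<noteq> 0 \<longrightarrow> min (v x) (v y) \<le> v (x + y)) \<and>
     (\<exists>t. t \<noteq> 0 \<and> v t = 1)"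

definition vclose :: "('a::field \<Rightarrow> int) \<Rightarrow> int \<Rightarrow> 'a \<Rightarrow> 'a \<Rightarrow> bool" where
  "vclose v k x y \<longleftrightarrow> x = y \<or> k \<le> v (x - y)"

definition vcomplete :: "('a::field \<Rightarrow> int) \<Rightarrow> bool" where
  "vcomplete v \<longleftrightarrow>
     (\<forall>f :: nat \<Rightarrow> 'a. (\<forall>k. \<exists>N. \<forall>m\<ge>N. \<forall>n\<ge>N. vclose v k (f m) (f n)) \<longrightarrow>
        (\<exists>L. \<forall>k. \<exists>N. \<forall>n\<ge>N. vclose v k (f n) L))"

definition OF :: "('a::field \<Rightarrow> int) \<Rightarrow> 'a set" where
  "OF v = {x. x = 0 \<or> 0 \<le> v x}"

definition pid :: "('a::field \<Rightarrow> int) \<Rightarrow> 'a set" where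
  "pid v = {x. x = 0 \<or> 0 < v x}"

definition OFunits :: "('a::field \<Rightarrow> int) \<Rightarrow> 'a set" where
  "OFunits v = {x. x \<noteq> 0 \<and> v x = 0}"

definition finite_residue :: "('a::field \<Rightarrow> int) \<Rightarrow> bool" where
  "finite_residue v \<longleftrightarrow>
     (\<exists>S. finite S \<and> S \<subseteq> OF v \<and> (\<forall>x\<in>OF v. \<exists>s\<in>S. x - s \<in> pid v))"

definition nonarch_local_field :: "('a::field \<Rightarrow> int) \<Rightarrow> bool" where
  "nonarch_local_field v \<longleftrightarrow> dval v \<and> vcomplete v \<and> finite_residue v"

text \<open>Nondyadic: residue characteristic different from 2, i.e. 2 is a unit of O_F.\<close>
definition nondyadic :: "('a::field \<Rightarrow> int) \<Rightarrow> bool" where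
  "nondyadic v \<longleftrightarrow> (2::'a) \<in> OFunits v"

definition uniformizer :: "('a::field \<Rightarrow> int) \<Rightarrow> 'a \<Rightarrow> bool" where
  "uniformizer v t \<longleftrightarrow> t \<noteq> 0 \<and> v t = 1"

text \<open>The image of a in k is a nonzero square in k (a in O_F).\<close>
definition residue_unit_square :: "('a::field \<Rightarrow> int) \<Rightarrow> 'a \<Rightarrow> bool" where
  "residue_unit_square v a \<longleftrightarrow> (\<exists>u\<in>OFunits v. u * u - a \<in> pid v)"

text \<open>Q a0 a1 a2 a3 stands for a0 + a1 x1 + a2 x2 + a3 x3, where
  x1^2 = x1 - e, x2^2 = p, x2 x1 = (1 - x1) x2, x3 = x1 x2.
  Writing elements as z + w x2 with z, w in K = F[x1], the multiplication is
  (z + w x2)(z' + w' x2) = (z z' + p w sigma(w')) + (z w' + w sigma(z')) x2.\<close>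

datatype 'a quat = Q 'a 'a 'a 'a

fun qc0 :: "'a quat \<Rightarrow> 'a" where "qc0 (Q a b c d) = a"

definition kmul :: "'a::field \<Rightarrow> 'a \<times> 'a \<Rightarrow> 'a \<times> 'a \<Rightarrow> 'a \<times> 'a" where
  "kmul e c d = (fst c * fst d - e * snd c * snd d,
                 fst c * snd d + snd c * fst d + snd c * snd d)"

definition ksig :: "'a::field \<times> 'a \<Rightarrow> 'a \<times> 'a" where
  "ksig d = (fst d + snd d, - snd d)"

definition kadd :: "'a::field \<times> 'a \<Rightarrow> 'a \<times> 'a \<Rightarrow> 'a \<times> 'a" where
  "kadd c d = (fst c + fst d, snd c + snd d)"

definition kscal :: "'a::field \<Rightarrow> 'a \<times> 'a \<Rightarrow> 'a \<times> 'a" where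
  "kscal a d = (a * fst d, a * snd d)"

fun qmul :: "'a::field \<Rightarrow> 'a \<Rightarrow> 'a quat \<Rightarrow> 'a quat \<Rightarrow> 'a quat" where
  "qmul e p (Q a0 a1 a2 a3) (Q b0 b1 b2 b3) =
     (let z = (a0, a1); w = (a2, a3); z' = (b0, b1); w' = (b2, b3);
          u = kadd (kmul e z z') (kscal p (kmul e w (ksig w')));
          t = kadd (kmul e z w') (kmul e w (ksig z'))
      in Q (fst u) (snd u) (fst t) (snd t))"

fun qadd :: "'a::field quat \<Rightarrow> 'a quat \<Rightarrow> 'a quat" where
  "qadd (Q a0 a1 a2 a3) (Q b0 b1 b2 b3) = Q (a0 + b0) (a1 + b1) (a2 + b2) (a3 + b3)"

fun qscal :: "'a::field \<Rightarrow> 'a quat \<Rightarrow> 'a quat" where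
  "qscal c (Q a0 a1 a2 a3) = Q (c * a0) (c * a1) (c * a2) (c * a3)"

definition qzero :: "'a::field quat" where "qzero = Q 0 0 0 0"
definition qone :: "'a::field quat" where "qone = Q 1 0 0 0"
definition qx1 :: "'a::field quat" where "qx1 = Q 0 1 0 0"
definition qx2 :: "'a::field quat" where "qx2 = Q 0 0 1 0"
definition qx3 :: "'a::field quat" where "qx3 = Q 0 0 0 1"

text \<open>Standard (canonical) involution: conj(z + w x2) = sigma(z) - w x2.\<close>
fun qconj :: "'a::field quat \<Rightarrow> 'a quat" where
  "qconj (Q a0 a1 a2 a3) = Q (a0 + a1) (- a1) (- a2) (- a3)"

definition nrd :: "'a::field \<Rightarrow> 'a \<Rightarrow> 'a quat \<Rightarrow> 'a" where
  "nrd e p a = qc0 (qmul e p a (qconj a))"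

text \<open>A is ramified iff it is a division algebra; split otherwise (then A = M_2(F)).\<close>
definition quat_division :: "'a::field \<Rightarrow> 'a \<Rightarrow> bool" where
  "quat_division e p \<longleftrightarrow>
     (\<forall>a. a \<noteq> qzero \<longrightarrow> (\<exists>b. qmul e p a b = qone \<and> qmul e p b a = qone))"

definition quat_split :: "'a::field \<Rightarrow> 'a \<Rightarrow> bool" where
  "quat_split e p \<longleftrightarrow> \<not> quat_division e p"

definition normalizer :: "'a::field \<Rightarrow> 'a \<Rightarrow> 'a quat set \<Rightarrow> 'a quat set" where
  "normalizer e p Ord = {g. \<exists>h. qmul e p g h = qone \<and> qmul e p h g = qone \<and>
                           (\<lambda>y. qmul e p (qmul e p g y) h) ` Ord = Ord}"

definition xab :: "'a::field \<Rightarrow> 'a \<Rightarrow> 'a quat" where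
  "xab a b = qadd (qscal a qx1) (qadd qx2 (qscal b qx3))"

definition bass_order ::
  "('a::field \<Rightarrow> int) \<Rightarrow> 'a \<Rightarrow> 'a \<Rightarrow> 'a \<Rightarrow> nat \<Rightarrow> 'a quat set" where
  "bass_order v p a b n =
     {qadd (qscal c0 qone) (qadd (qscal c1 (xab a b))
        (qadd (qscal (c2 * p ^ (n div 2)) qx1) (qscal (c3 * p ^ ((n - 1) div 2)) qx3)))
      | c0 c1 c2 c3. c0 \<in> OF v \<and> c1 \<in> OF v \<and> c2 \<in> OF v \<and> c3 \<in> OF v}"

definition subalg_M :: "'a::field quat \<Rightarrow> 'a quat set" where
  "subalg_M x = {qadd (qscal c0 qone) (qscal c1 x) | c0 c1. True}"

definition units_M :: "'a::field \<Rightarrow> 'a \<Rightarrow> 'a quat \<Rightarrow> 'a quat set" where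
  "units_M e p x = {y \<in> subalg_M x. \<exists>z\<in>subalg_M x. qmul e p y z = qone}"

definition coordM :: "'a::field quat \<Rightarrow> 'a quat \<Rightarrow> 'a \<times> 'a" where
  "coordM x w = (THE c. w = qadd (qscal (fst c) qone) (qscal (snd c) x))"

text \<open>Nm_{M/F}(y) = determinant of the F-linear map m |-> y m on M w.r.t. basis (1, x).\<close>
definition normM :: "'a::field \<Rightarrow> 'a \<Rightarrow> 'a quat \<Rightarrow> 'a quat \<Rightarrow> 'a" where
  "normM e p x y =
     (let c1 = coordM x (qmul e p y qone); c2 = coordM x (qmul e p y x)
      in fst c1 * snd c2 - fst c2 * snd c1)"

end

theory Submission
  imports Defs
begin

definition Iv :: "('a::field \<Rightarrow> int) \<Rightarrow> int \<Rightarrow> 'a set" where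
  "Iv v k = {x. x = 0 \<or> k \<le> v x}"

locale vfield =
  fixes v :: "'a::field \<Rightarrow> int"
  assumes dv: "dval v"
begin

lemma vmul: "x \<noteq> 0 \<Longrightarrow> y \<noteq> 0 \<Longrightarrow> v (x * y) = v x + v y"
  using dv unfolding dval_def by blast

lemma vadd: "x \<noteq> 0 \<Longrightarrow> y \<noteq> 0 \<Longrightarrow> x + y \<noteq> 0 \<Longrightarrow> min (v x) (v y) \<le> v (x + y)"
  using dv unfolding dval_def by blast

lemma v1: "v 1 = 0"
  using vmul[of 1 1] by simp

lemma vneg1: "v (-1) = 0"
  using vmul[of "-1" "-1"] v1 by simp

lemma vneg: "v (- x) = v x"
proof (cases "x = 0")
  case True then show ?thesis by simp
next
  case False
  then have "v ((-1) * x) = v (-1) + v x" by (intro vmul) auto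
  then show ?thesis using vneg1 by simp
qed

lemma vinv: "x \<noteq> 0 \<Longrightarrow> v (inverse x) = - v x"
  using vmul[of x "inverse x"] v1 by simp

lemma vdiv: "x \<noteq> 0 \<Longrightarrow> y \<noteq> 0 \<Longrightarrow> v (x / y) = v x - v y"
  by (simp add: divide_inverse vmul vinv)

lemma vpow: "x \<noteq> 0 \<Longrightarrow> v (x ^ k) = int k * v x"
  by (induction k) (auto simp: vmul v1 algebra_simps)

lemma vdiff: "x \<noteq> 0 \<Longrightarrow> y \<noteq> 0 \<Longrightarrow> x - y \<noteq> 0 \<Longrightarrow> min (v x) (v y) \<le> v (x - y)"
  using vadd[of x "-y"] by (simp add: vneg)

lemma vstrict: assumes "x \<noteq> 0" "y = 0 \<or> v x < v y" shows "x + y \<noteq> 0 \<and> v (x + y) = v x"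
proof (cases "y = 0")
  case True then show ?thesis using assms by simp
next
  case False
  with assms have lt: "v x < v y" by auto
  have ne: "x + y \<noteq> 0"
  proof
    assume "x + y = 0" then have "y = - x" by (simp add: add_eq_0_iff2)
    then show False using lt by (simp add: vneg)
  qed
  have "min (v x) (v y) \<le> v (x + y)" using vadd[OF assms(1) False ne] .
  then have g: "v x \<le> v (x + y)" using lt by simp
  have "x = (x + y) + (- y)" by simp
  then have "min (v (x+y)) (v (-y)) \<le> v x" using vadd[OF ne, of "-y"] False assms(1) by (metis add.commute add_uminus_conv_diff diff_add_cancel neg_equal_0_iff_equal)
  then have "v (x + y) \<le> v x" using lt by (simp add: vneg)
  with g ne show ?thesis by simp
qed

lemma I_0[simp]: "0 \<in> Iv v k" by (simp add: Iv_def)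

lemma I_add: "x \<in> Iv v k \<Longrightarrow> y \<in> Iv v k \<Longrightarrow> x + y \<in> Iv v k"
proof -
  assume a: "x \<in> Iv v k" "y \<in> Iv v k"
  show ?thesis
  proof (cases "x = 0 \<or> y = 0 \<or> x + y = 0")
    case True then show ?thesis using a by (auto simp: Iv_def)
  next
    case False
    then have "min (v x) (v y) \<le> v (x + y)" using vadd by blast
    then show ?thesis using a False by (auto simp: Iv_def)
  qed
qed

lemma I_uminus: "x \<in> Iv v k \<Longrightarrow> - x \<in> Iv v k"
  unfolding Iv_def by (simp add: vneg)

lemma I_uminus_iff[simp]: "- x \<in> Iv v k \<longleftrightarrow> x \<in> Iv v k"
  using I_uminus[of x] I_uminus[of "-x"] by auto

lemma I_diff: "x \<in> Iv v k \<Longrightarrow> y \<in> Iv v k \<Longrightarrow> x - y \<in> Iv v k"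
  using I_add[of x k "-y"] by simp

lemma I_mult: "x \<in> Iv v k \<Longrightarrow> y \<in> Iv v j \<Longrightarrow> x * y \<in> Iv v (k + j)"
  unfolding Iv_def by (cases "x = 0 \<or> y = 0") (auto simp: vmul)

lemma I_mono: "x \<in> Iv v k \<Longrightarrow> j \<le> k \<Longrightarrow> x \<in> Iv v j"
  unfolding Iv_def by auto

lemma I_mult': "x \<in> Iv v k \<Longrightarrow> y \<in> Iv v j \<Longrightarrow> k + j \<ge> l \<Longrightarrow> x * y \<in> Iv v l"
  using I_mult I_mono by blast

lemma I_1: "1 \<in> Iv v 0" by (simp add: Iv_def v1)

lemma I_pow: "x \<in> Iv v k \<Longrightarrow> x ^ m \<in> Iv v (int m * k)"
  by (induction m) (auto simp: I_1 algebra_simps intro: I_mult'[of x k _ "int _ * k"])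

lemma I_exact: "x \<noteq> 0 \<Longrightarrow> x \<in> Iv v (v x)" by (simp add: Iv_def)

lemma I_inv: "x \<noteq> 0 \<Longrightarrow> inverse x \<in> Iv v (- v x)"
  by (simp add: Iv_def vinv)

lemma OF_eq: "OF v = Iv v 0" by (simp add: OF_def Iv_def)
lemma pid_eq: "pid v = Iv v 1" by (auto simp: pid_def Iv_def)

lemma I_nonzero_not: "x \<noteq> 0 \<Longrightarrow> x \<notin> Iv v (v x + 1)" by (simp add: Iv_def)

lemma I_of_nat: "of_nat m \<in> Iv v 0"
  by (induction m) (auto simp: I_1 intro: I_add)

lemma I_numeral: "numeral m \<in> Iv v 0"
  using I_of_nat[of "numeral m"] by simp

lemma I_zero_all: "(\<forall>k. x \<in> Iv v k) \<Longrightarrow> x = 0"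
  using I_nonzero_not by blast

end

context vfield
begin

lemma vclose_iff: "vclose v k x y \<longleftrightarrow> x - y \<in> Iv v k"
  by (auto simp: vclose_def Iv_def)

lemma I_half: assumes "(2::'a) \<in> OFunits v" shows "inverse (2::'a) \<in> Iv v 0"
  using assms I_inv[of "2::'a"] by (auto simp: OFunits_def)

lemma hensel_aux: "(2::'b::comm_ring_1) * h = 1 \<Longrightarrow>
  u - (f + (u - f*f)*h)*(f + (u - f*f)*h) = (u - f*f)*(-(f-1)) - ((u-f*f)*(u-f*f))*(h*h)"
proof -
  assume h: "(2::'b::comm_ring_1) * h = 1"
  have e: "f*(u - f*f)*(2*h) = f*(u - f*f)" using h by simp
  have "u - (f + (u - f*f)*h)*(f + (u - f*f)*h) - ((u - f*f)*(-(f-1)) - ((u-f*f)*(u-f*f))*(h*h))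
     = f*(u - f*f) - f*(u - f*f)*(2*h)" by (simp add: algebra_simps)
  then show ?thesis using e by simp
qed

lemma hensel1:
  assumes comp: "vcomplete v" and two: "(2::'a) \<in> OFunits v" and u: "u - 1 \<in> Iv v 1"
  shows "\<exists>w. w * w = u \<and> w - 1 \<in> Iv v 1"
proof -
  define f where "f = rec_nat (1::'a) (\<lambda>k y. y + (u - y * y) * inverse 2)"
  have f0: "f 0 = 1" and fS: "\<And>k. f (Suc k) = f k + (u - f k * f k) * inverse 2"
    by (simp_all add: f_def)
  have h2: "inverse (2::'a) \<in> Iv v 0" using I_half[OF two] .
  have inv: "f k - 1 \<in> Iv v 1 \<and> u - f k * f k \<in> Iv v (int k + 1)" for k
  proof (induction k)
    case 0 then show ?case using u by (simp add: f0)
  next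
    case (Suc k)
    define d where "d = u - f k * f k"
    have d: "d \<in> Iv v (int k + 1)" using Suc d_def by simp
    have f1: "f k - 1 \<in> Iv v 1" using Suc by simp
    have dh: "d * inverse 2 \<in> Iv v (int k + 1)" using I_mult[OF d h2] by simp
    have a1: "f (Suc k) - 1 = (f k - 1) + d * inverse 2" by (simp add: fS d_def)
    have A: "f (Suc k) - 1 \<in> Iv v 1" unfolding a1
      by (intro I_add f1 I_mono[OF dh]) simp
    have two_ne: "(2::'a) \<noteq> 0" using two by (simp add: OFunits_def)
    have a2: "u - f (Suc k) * f (Suc k) = d * (- (f k - 1)) - (d * d) * (inverse 2 * inverse 2)"
    proof -
      have h: "2 * inverse 2 = (1::'a)" by (rule right_inverse[OF two_ne])
      show ?thesis unfolding fS d_def by (rule hensel_aux[OF h])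
    qed
    have B1: "d * (- (f k - 1)) \<in> Iv v (int k + 1 + 1)" by (intro I_mult d) (simp only: I_uminus_iff f1)
    have B2: "(d * d) * (inverse 2 * inverse 2) \<in> Iv v (int k + 1 + 1)"
      by (rule I_mult'[OF I_mult[OF d d] I_mult[OF h2 h2]]) simp
    have "u - f (Suc k) * f (Suc k) \<in> Iv v (int (Suc k) + 1)"
      unfolding a2 using I_diff[OF B1 B2] by simp
    with A show ?case by simp
  qed
  have step: "f (Suc k) - f k \<in> Iv v (int k + 1)" for k
  proof -
    have "f (Suc k) - f k = (u - f k * f k) * inverse 2" by (simp only: fS) simp
    then show ?thesis using I_mult[OF conjunct2[OF inv[of k]] h2] by (simp only:) simp
  qed
  have tail: "f m - f N \<in> Iv v (int N + 1)" if "N \<le> m" for m N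
    using that
  proof (induction m)
    case 0 then show ?case by simp
  next
    case (Suc m)
    show ?case
    proof (cases "N = Suc m")
      case True then show ?thesis by simp
    next
      case False
      then have "N \<le> m" using Suc by simp
      then have "f m - f N \<in> Iv v (int N + 1)" using Suc by simp
      moreover have "f (Suc m) - f m \<in> Iv v (int N + 1)"
        using I_mono[OF step[of m]] \<open>N \<le> m\<close> by simp
      ultimately show ?thesis using I_add by fastforce
    qed
  qed
  have cauchy: "\<forall>k. \<exists>N. \<forall>m\<ge>N. \<forall>n\<ge>N. vclose v k (f m) (f n)"
  proof
    fix k
    show "\<exists>N. \<forall>m\<ge>N. \<forall>n\<ge>N. vclose v k (f m) (f n)"
    proof (intro exI allI impI)
      fix m n assume "nat k \<le> m" "nat k \<le> n"
      then have "f m - f (nat k) \<in> Iv v (int (nat k) + 1)" "f n - f (nat k) \<in> Iv v (int (nat k) + 1)"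
        using tail[of "nat k" m] tail[of "nat k" n] by auto
      then have "f m - f n \<in> Iv v (int (nat k) + 1)"
        using I_diff by fastforce
      then show "vclose v k (f m) (f n)" unfolding vclose_iff by (rule I_mono) simp
    qed
  qed
  obtain L where L: "\<forall>k. \<exists>N. \<forall>n\<ge>N. vclose v k (f n) L"
    using comp cauchy unfolding vcomplete_def by blast
  have fO: "f k \<in> Iv v 0" for k
  proof -
    have "f k = (f k - 1) + 1" by simp
    then show ?thesis using I_add[OF I_mono[OF conjunct1[OF inv[of k]]] I_1] by simp
  qed
  have sq: "L * L - u \<in> Iv v k" for k
  proof -
    define k' where "k' = max k 1"
    obtain N where N: "\<forall>n\<ge>N. f n - L \<in> Iv v k'" using L unfolding vclose_iff by blast
    define m where "m = max N (nat k')"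
    have a: "f m - L \<in> Iv v k'" using N by (simp add: m_def)
    then have b: "L - f m \<in> Iv v k'" using I_uminus by fastforce
    have c: "L + f m \<in> Iv v 0"
    proof -
      have "L + f m = (L - f m) + f m + f m" by simp
      moreover have "(L - f m) + f m + f m \<in> Iv v 0"
        using I_add[OF I_add[OF I_mono[OF b] fO[of m]] fO[of m]] k'_def by simp
      ultimately show ?thesis by simp
    qed
    have e1: "L * L - u = (L - f m) * (L + f m) - (u - f m * f m)" by (simp add: algebra_simps)
    have "(L - f m) * (L + f m) \<in> Iv v k'" using I_mult[OF b c] by simp
    moreover have "u - f m * f m \<in> Iv v k'"
      using I_mono[OF conjunct2[OF inv[of m]]] by (simp add: m_def)
    ultimately have "L * L - u \<in> Iv v k'" unfolding e1 using I_diff by blast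
    then show ?thesis by (rule I_mono) (simp add: k'_def)
  qed
  have "L * L = u" using I_zero_all[of "L * L - u"] sq by simp
  moreover have "L - 1 \<in> Iv v 1"
  proof -
    obtain N where N: "\<forall>n\<ge>N. f n - L \<in> Iv v 1" using L unfolding vclose_iff by blast
    then have "f N - L \<in> Iv v 1" by simp
    then have "L - f N \<in> Iv v 1" using I_uminus by fastforce
    moreover have "L - 1 = (L - f N) + (f N - 1)" by simp
    ultimately show ?thesis using I_add inv by metis
  qed
  ultimately show ?thesis by blast
qed

lemma hensel_unit:
  assumes comp: "vcomplete v" and two: "(2::'a) \<in> OFunits v"
    and w0: "w0 \<in> OFunits v" and u: "w0 * w0 - u \<in> Iv v 1"
  shows "\<exists>w. w * w = u \<and> w \<in> OFunits v"
proof -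
  have w0ne: "w0 \<noteq> 0" and vw0: "v w0 = 0" using w0 by (auto simp: OFunits_def)
  have iw: "inverse (w0 * w0) \<in> Iv v 0" using I_inv[of "w0*w0"] w0ne vmul[OF w0ne w0ne] vw0 by simp
  have "u / (w0 * w0) - 1 = - ((w0 * w0 - u) * inverse (w0 * w0))" using w0ne by (simp add: field_simps)
  moreover have "(w0 * w0 - u) * inverse (w0 * w0) \<in> Iv v 1" using I_mult[OF u iw] by simp
  ultimately have "u / (w0 * w0) - 1 \<in> Iv v 1" by simp
  then obtain w' where w': "w' * w' = u / (w0 * w0)" "w' - 1 \<in> Iv v 1" using hensel1[OF comp two] by blast
  have w'ne: "w' \<noteq> 0"
  proof
    assume "w' = 0" then have "- 1 \<in> Iv v 1" using w' by simp
    then show False by (simp add: Iv_def vneg1)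
  qed
  have vw': "v w' = 0"
  proof -
    have "w' = 1 + (w' - 1)" by simp
    moreover have "(w' - 1) = 0 \<or> v 1 < v (w' - 1)" using w'(2) by (auto simp: Iv_def v1)
    ultimately show ?thesis using vstrict[of 1 "w' - 1"] v1 by simp
  qed
  have "(w' * w0) * (w' * w0) = u" using w'(1) w0ne by (simp add: field_simps)
  moreover have "w' * w0 \<in> OFunits v" using w'ne w0ne vw' vw0 by (simp add: OFunits_def vmul)
  ultimately show ?thesis by blast
qed

end

context vfield
begin

lemma unit_iff: "x \<in> OFunits v \<longleftrightarrow> x \<in> Iv v 0 \<and> x \<notin> Iv v 1"
  by (auto simp: OFunits_def Iv_def)

lemma unit_mult: "x \<in> OFunits v \<Longrightarrow> y \<in> OFunits v \<Longrightarrow> x * y \<in> OFunits v"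
  by (auto simp: OFunits_def vmul)

lemma unit_cong: assumes "x \<in> OFunits v" "y - x \<in> Iv v 1" shows "y \<in> OFunits v"
proof -
  have x: "x \<noteq> 0" "v x = 0" using assms by (auto simp: OFunits_def)
  have "y - x = 0 \<or> v x < v (y - x)" using assms(2) x by (auto simp: Iv_def)
  then have "x + (y - x) \<noteq> 0 \<and> v (x + (y - x)) = v x" by (rule vstrict[OF x(1)])
  then show ?thesis using x by (simp add: OFunits_def)
qed

lemma unit_inv: "x \<in> OFunits v \<Longrightarrow> inverse x \<in> OFunits v"
  by (auto simp: OFunits_def vinv)

lemma unit_neg: "x \<in> OFunits v \<Longrightarrow> - x \<in> OFunits v"
  by (auto simp: OFunits_def vneg)

lemma prime_I1: assumes "x \<in> Iv v 0" "y \<in> Iv v 0" "x * y \<in> Iv v 1"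
  shows "x \<in> Iv v 1 \<or> y \<in> Iv v 1"
proof (rule ccontr)
  assume "\<not> ?thesis"
  then have "x \<in> OFunits v" "y \<in> OFunits v" using assms unit_iff by auto
  then have "x * y \<in> OFunits v" by (rule unit_mult)
  then show False using assms(3) unit_iff by auto
qed

lemma unit_I0: "x \<in> OFunits v \<Longrightarrow> x \<in> Iv v 0" by (simp add: unit_iff)

lemma unit_mult_I: assumes "u \<in> OFunits v" shows "u * x \<in> Iv v k \<longleftrightarrow> x \<in> Iv v k"
proof
  assume "x \<in> Iv v k" then show "u * x \<in> Iv v k" using I_mult[OF unit_I0[OF assms]] by fastforce
next
  assume "u * x \<in> Iv v k"
  then have "inverse u * (u * x) \<in> Iv v (0 + k)" using I_mult[OF unit_I0[OF unit_inv[OF assms]]] by blast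
  moreover have "u \<noteq> 0" using assms by (simp add: OFunits_def)
  ultimately show "x \<in> Iv v k" by (simp add: mult.assoc[symmetric])
qed

definition rsq :: "'a \<Rightarrow> bool" where
  "rsq x \<longleftrightarrow> (\<exists>u\<in>OFunits v. u * u - x \<in> Iv v 1)"

lemma rsq_eq: "residue_unit_square v x = rsq x"
  by (simp add: residue_unit_square_def rsq_def pid_eq)

lemma rsq_cong: "rsq x \<Longrightarrow> y - x \<in> Iv v 1 \<Longrightarrow> rsq y"
  unfolding rsq_def using I_diff by fastforce

lemma rsq_mult: "rsq x \<Longrightarrow> rsq y \<Longrightarrow> x \<in> Iv v 0 \<Longrightarrow> y \<in> Iv v 0 \<Longrightarrow> rsq (x * y)"
proof -
  assume "rsq x" "rsq y" and xy: "x \<in> Iv v 0" "y \<in> Iv v 0"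
  then obtain u w where u: "u \<in> OFunits v" "u * u - x \<in> Iv v 1" and w: "w \<in> OFunits v" "w * w - y \<in> Iv v 1"
    unfolding rsq_def by blast
  have "(u*w) * (u*w) - x * y = (u*u - x) * (w * w) + x * (w * w - y)" by (simp add: algebra_simps)
  moreover have "(u*u - x) * (w * w) \<in> Iv v 1" using I_mult[OF u(2) I_mult[OF unit_I0[OF w(1)] unit_I0[OF w(1)]]] by simp
  moreover have "x * (w * w - y) \<in> Iv v 1" using I_mult[OF xy(1) w(2)] by simp
  ultimately have "(u*w) * (u*w) - x * y \<in> Iv v 1" using I_add by metis
  then show "rsq (x * y)" unfolding rsq_def using unit_mult[OF u(1) w(1)] by blast
qed

lemma rsq_sq: "u \<in> OFunits v \<Longrightarrow> rsq (u * u)"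
  unfolding rsq_def by force

end

locale vresid = vfield +
  assumes fres: "finite_residue v" and two: "(2::'a) \<in> OFunits v"
begin

definition Sset where "Sset = (SOME S. finite S \<and> S \<subseteq> OF v \<and> (\<forall>x\<in>OF v. \<exists>s\<in>S. x - s \<in> pid v))"

lemma Sset: "finite Sset" "Sset \<subseteq> Iv v 0" "\<And>x. x \<in> Iv v 0 \<Longrightarrow> \<exists>s\<in>Sset. x - s \<in> Iv v 1"
proof -
  have "\<exists>S. finite S \<and> S \<subseteq> OF v \<and> (\<forall>x\<in>OF v. \<exists>s\<in>S. x - s \<in> pid v)"
    using fres by (simp add: finite_residue_def)
  then have h: "finite Sset \<and> Sset \<subseteq> OF v \<and> (\<forall>x\<in>OF v. \<exists>s\<in>Sset. x - s \<in> pid v)"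
    unfolding Sset_def by (rule someI_ex)
  then show "finite Sset" "Sset \<subseteq> Iv v 0" "\<And>x. x \<in> Iv v 0 \<Longrightarrow> \<exists>s\<in>Sset. x - s \<in> Iv v 1"
    by (auto simp: OF_eq pid_eq)
qed

definition rep where "rep x = (SOME s. s \<in> Sset \<and> x - s \<in> Iv v 1)"

lemma rep: "x \<in> Iv v 0 \<Longrightarrow> rep x \<in> Sset \<and> x - rep x \<in> Iv v 1"
proof -
  assume "x \<in> Iv v 0"
  then have "\<exists>s. s \<in> Sset \<and> x - s \<in> Iv v 1" using Sset(3)[of x] by blast
  then show ?thesis unfolding rep_def by (rule someI_ex)
qed

lemma rep_cong: assumes "x - y \<in> Iv v 1" shows "rep x = rep y"
proof -
  have "(\<lambda>s. s \<in> Sset \<and> x - s \<in> Iv v 1) = (\<lambda>s. s \<in> Sset \<and> y - s \<in> Iv v 1)"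
  proof (intro ext iffI conjI)
    fix s assume "s \<in> Sset \<and> x - s \<in> Iv v 1"
    moreover have "y - s = (x - s) - (x - y)" by simp
    ultimately show "s \<in> Sset" "y - s \<in> Iv v 1" using I_diff assms by metis+
  next
    fix s assume "s \<in> Sset \<and> y - s \<in> Iv v 1"
    moreover have "x - s = (y - s) + (x - y)" by simp
    ultimately show "s \<in> Sset" "x - s \<in> Iv v 1" using I_add assms by metis+
  qed
  then show ?thesis unfolding rep_def by (simp only:)
qed

lemma rep_eq_iff: assumes "x \<in> Iv v 0" "y \<in> Iv v 0" shows "rep x = rep y \<longleftrightarrow> x - y \<in> Iv v 1"
proof
  assume h: "rep x = rep y"
  have "x - y = (x - rep x) - (y - rep y)" using h by (simp add: algebra_simps)
  then show "x - y \<in> Iv v 1" using rep[OF assms(1)] rep[OF assms(2)] I_diff by metis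
qed (rule rep_cong)

definition Uset where "Uset = rep ` OFunits v"

lemma Uset_fin: "finite Uset"
  using Sset(1) rep unit_I0 unfolding Uset_def by (meson finite_subset image_subsetI)

lemma Uset_unit: "s \<in> Uset \<Longrightarrow> s \<in> OFunits v \<and> rep s = s"
proof -
  assume "s \<in> Uset" then obtain x where x: "x \<in> OFunits v" "s = rep x" unfolding Uset_def by blast
  have d: "x - rep x \<in> Iv v 1" using rep[OF unit_I0[OF x(1)]] by simp
  then have "rep x - x \<in> Iv v 1" using I_uminus by fastforce
  then have su: "s \<in> OFunits v" using unit_cong[OF x(1)] x by simp
  have "rep s = rep x" using x d by (metis I_uminus_iff minus_diff_eq rep_cong)
  then show ?thesis using su x by simp
qed

lemma rep_unit_in: "x \<in> OFunits v \<Longrightarrow> rep x \<in> Uset" by (simp add: Uset_def)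

definition phi where "phi s = rep (s * s)"

lemma two_not: "(2::'a) \<notin> Iv v 1" using two unit_iff by auto

lemma fiber: assumes s: "s \<in> Uset" shows "{t \<in> Uset. phi t = phi s} = {s, rep (- s)}" and "rep (- s) \<noteq> s"
proof -
  have su: "s \<in> OFunits v" "rep s = s" using Uset_unit[OF s] by auto
  show ne: "rep (- s) \<noteq> s"
  proof
    assume "rep (- s) = s"
    then have "rep (- s) = rep s" using su by simp
    then have "- s - s \<in> Iv v 1" using rep_eq_iff unit_I0[OF su(1)] by (metis I_uminus_iff)
    then have "(-2) * s \<in> Iv v 1" by (simp add: algebra_simps)
    then have "-2 \<in> Iv v 1" using unit_mult_I[OF su(1), of "-2"] by (simp add: mult.commute)
    then show False using two_not by simp
  qed
  show "{t \<in> Uset. phi t = phi s} = {s, rep (- s)}"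
  proof (intro equalityI subsetI)
    fix t assume "t \<in> {t \<in> Uset. phi t = phi s}"
    then have t: "t \<in> Uset" "phi t = phi s" by auto
    have tu: "t \<in> OFunits v" "rep t = t" using Uset_unit[OF t(1)] by auto
    have "t * t - s * s \<in> Iv v 1"
      using t(2) rep_eq_iff[of "t*t" "s*s"] unit_I0 unit_mult tu su unfolding phi_def by metis
    then have "(t - s) * (t + s) \<in> Iv v 1" by (simp add: algebra_simps)
    then have "t - s \<in> Iv v 1 \<or> t + s \<in> Iv v 1"
      by (rule prime_I1[rotated 2]) (use tu su unit_I0 I_add I_diff in metis)+
    then show "t \<in> {s, rep (- s)}"
    proof
      assume "t - s \<in> Iv v 1" then have "rep t = rep s" by (rule rep_cong)
      then show ?thesis using tu su by simp
    next
      assume "t + s \<in> Iv v 1" then have "rep t = rep (- s)" by (intro rep_cong) simp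
      then show ?thesis using tu by simp
    qed
  next
    fix t assume "t \<in> {s, rep (- s)}"
    then show "t \<in> {t \<in> Uset. phi t = phi s}"
    proof
      assume "t = s" then show ?thesis using s by simp
    next
      assume "t \<in> {rep (- s)}"
      then have t: "t = rep (- s)" by simp
      have mu: "- s \<in> OFunits v" using unit_neg su by simp
      then have tu: "t \<in> Uset" using t rep_unit_in by simp
      have "- s - t \<in> Iv v 1" using rep[OF unit_I0[OF mu]] t by simp
      moreover have "- s + t \<in> Iv v 0" using I_add unit_I0 mu Uset_unit[OF tu] by blast
      ultimately have "(- s - t) * (- s + t) \<in> Iv v 1"
        using I_mult'[of "- s - t" 1 "- s + t" 0 1] by simp
      then have "s * s - t * t \<in> Iv v 1" by (simp add: algebra_simps)
      then have "phi s = phi t" unfolding phi_def by (rule rep_cong)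
      then have "phi t = phi s" by simp
      then show ?thesis using tu by simp
    qed
  qed
qed

definition Sq where "Sq = phi ` Uset"

lemma Sq_sub: "Sq \<subseteq> Uset"
  unfolding Sq_def phi_def using Uset_unit unit_mult rep_unit_in by auto

lemma card_U: "card Uset = 2 * card Sq"
proof -
  have U: "Uset = (\<Union>y\<in>Sq. {t \<in> Uset. phi t = y})" unfolding Sq_def by auto
  have "card (\<Union>y\<in>Sq. {t \<in> Uset. phi t = y}) = (\<Sum>y\<in>Sq. card {t \<in> Uset. phi t = y})"
    by (rule card_UN_disjoint) (use Uset_fin Sq_sub finite_subset in auto)
  also have "\<dots> = (\<Sum>y\<in>Sq. 2)"
  proof (rule sum.cong[OF refl])
    fix y assume "y \<in> Sq"
    then obtain s where s: "s \<in> Uset" "y = phi s" unfolding Sq_def by auto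
    show "card {t \<in> Uset. phi t = y} = 2" using fiber[OF s(1)] s(2) by simp
  qed
  finally show ?thesis using U by simp
qed

lemma nonsq_prod:
  assumes a1: "a1 \<in> OFunits v" and a2: "a2 \<in> OFunits v" and n1: "\<not> rsq a1" and n2: "\<not> rsq a2"
  shows "rsq (a1 * a2)"
proof -
  define psi where "psi s = rep (a1 * s)" for s
  have psiU: "psi s \<in> Uset" if "s \<in> Uset" for s
    using that unfolding psi_def using Uset_unit unit_mult a1 rep_unit_in by simp
  have inj: "inj_on psi Uset"
  proof (rule inj_onI)
    fix s t assume st: "s \<in> Uset" "t \<in> Uset" "psi s = psi t"
    have su: "s \<in> OFunits v" "rep s = s" and tu: "t \<in> OFunits v" "rep t = t" using Uset_unit st by auto
    have "a1 * s - a1 * t \<in> Iv v 1"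
      using st(3) rep_eq_iff[of "a1*s" "a1*t"] unit_I0 unit_mult a1 su tu unfolding psi_def by metis
    then have "a1 * (s - t) \<in> Iv v 1" by (simp add: algebra_simps)
    then have "s - t \<in> Iv v 1" using unit_mult_I[OF a1] by simp
    then show "s = t" using rep_cong su tu by metis
  qed
  have disj: "psi ` Sq \<subseteq> Uset - Sq"
  proof
    fix y assume "y \<in> psi ` Sq"
    then obtain s where s: "s \<in> Uset" "y = psi (phi s)" unfolding Sq_def by auto
    have su: "s \<in> OFunits v" using Uset_unit s by auto
    have ps: "phi s \<in> Uset" using Sq_sub s(1) unfolding Sq_def by auto
    have yU: "y \<in> Uset" using psiU[OF ps] s by simp
    show "y \<in> Uset - Sq"
    proof (rule ccontr)
      assume "y \<notin> Uset - Sq"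
      then have "y \<in> Sq" using yU by simp
      then obtain t where t: "t \<in> Uset" "y = phi t" unfolding Sq_def by auto
      have tu: "t \<in> OFunits v" using Uset_unit t by auto
      have c1: "s * s - phi s \<in> Iv v 1" using rep[of "s*s"] unit_I0 unit_mult su unfolding phi_def by blast
      have c2: "a1 * phi s - y \<in> Iv v 1"
        using rep[of "a1 * phi s"] unit_I0 unit_mult a1 Uset_unit[OF ps] s(2) unfolding psi_def by blast
      have c3: "t * t - y \<in> Iv v 1" using rep[of "t*t"] unit_I0 unit_mult tu t(2) unfolding phi_def by blast
      have "a1 * (s * s) - t * t = a1 * (s * s - phi s) + (a1 * phi s - y) - (t * t - y)" by (simp add: algebra_simps)
      moreover have "a1 * (s * s - phi s) \<in> Iv v 1" using unit_mult_I[OF a1] c1 by simp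
      ultimately have "a1 * (s * s) - t * t \<in> Iv v 1" using c2 c3 I_add I_diff by metis
      then have "inverse (s*s) * (a1 * (s * s) - t * t) \<in> Iv v 1"
        using unit_mult_I[OF unit_inv[OF unit_mult[OF su su]]] by blast
      moreover have "s \<noteq> 0" using su by (simp add: OFunits_def)
      ultimately have "a1 - (t / s) * (t / s) \<in> Iv v 1" by (simp add: field_simps)
      then have "(t/s) * (t/s) - a1 \<in> Iv v 1" using I_uminus by fastforce
      moreover have "t / s \<in> OFunits v" using unit_mult[OF tu unit_inv[OF su]] by (simp add: divide_inverse)
      ultimately show False using n1 unfolding rsq_def by blast
    qed
  qed
  have fin: "finite (Uset - Sq)" using Uset_fin by simp
  have cS: "card (psi ` Sq) = card Sq" using card_image inj_on_subset[OF inj Sq_sub] by blast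
  have "card (Uset - Sq) = card Sq" using card_Diff_subset[OF finite_subset[OF Sq_sub Uset_fin] Sq_sub] card_U by simp
  then have eq: "psi ` Sq = Uset - Sq" using card_subset_eq[OF fin disj] cS by simp
  have r2: "rep a2 \<in> Uset" using rep_unit_in[OF a2] .
  have "rep a2 \<notin> Sq"
  proof
    assume "rep a2 \<in> Sq"
    then obtain s where s: "s \<in> Uset" "rep a2 = phi s" unfolding Sq_def by auto
    have su: "s \<in> OFunits v" using Uset_unit s by auto
    have "s * s - a2 \<in> Iv v 1"
      using rep_eq_iff[of "s*s" a2] unit_I0 unit_mult su a2 s(2) unfolding phi_def by metis
    then show False using n2 su unfolding rsq_def by blast
  qed
  then have "rep a2 \<in> psi ` Sq" using eq r2 by simp
  then obtain s where s: "s \<in> Uset" "rep a2 = psi (phi s)" unfolding Sq_def by auto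
  have su: "s \<in> OFunits v" using Uset_unit s by auto
  have ps: "phi s \<in> Uset" using Sq_sub s(1) unfolding Sq_def by auto
  have c1: "s * s - phi s \<in> Iv v 1" using rep[of "s*s"] unit_I0 unit_mult su unfolding phi_def by blast
  have c2: "a1 * phi s - a2 \<in> Iv v 1"
    using rep_eq_iff[of "a1 * phi s" a2] unit_I0 unit_mult a1 a2 Uset_unit[OF ps] s(2) unfolding psi_def by metis
  have "(a1 * s) * (a1 * s) - a1 * a2 = a1 * a1 * (s * s - phi s) + a1 * (a1 * phi s - a2)" by (simp add: algebra_simps)
  moreover have "a1 * a1 * (s * s - phi s) \<in> Iv v 1" using unit_mult_I[OF unit_mult[OF a1 a1]] c1 by simp
  moreover have "a1 * (a1 * phi s - a2) \<in> Iv v 1" using unit_mult_I[OF a1] c2 by simp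
  ultimately have "(a1 * s) * (a1 * s) - a1 * a2 \<in> Iv v 1" using I_add by metis
  then show ?thesis unfolding rsq_def using unit_mult[OF a1 su] by blast
qed

end

lemma qmul_Q: "qmul e p (Q a0 a1 a2 a3) (Q b0 b1 b2 b3) =
  Q (a0*b0 - e*a1*b1 + p*(a2*(b2+b3) - e*a3*(-b3)))
    (a0*b1 + a1*b0 + a1*b1 + p*(a2*(-b3) + a3*(b2+b3) + a3*(-b3)))
    (a0*b2 - e*a1*b3 + (a2*(b0+b1) - e*a3*(-b1)))
    (a0*b3 + a1*b2 + a1*b3 + (a2*(-b1) + a3*(b0+b1) + a3*(-b1)))"
  by (simp add: kmul_def kadd_def kscal_def ksig_def Let_def)

declare qmul.simps[simp del]

lemma qadd_Q: "qadd (Q a0 a1 a2 a3) (Q b0 b1 b2 b3) = Q (a0+b0) (a1+b1) (a2+b2) (a3+b3)" by simp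
lemma qscal_Q: "qscal c (Q a0 a1 a2 a3) = Q (c*a0) (c*a1) (c*a2) (c*a3)" by simp

locale ctx = vresid v for v :: "'a::field \<Rightarrow> int" +
  fixes p e a b :: 'a and n :: nat and R S T U W A :: 'a and spl :: bool
  assumes comp: "vcomplete v"
    and pne: "p \<noteq> 0" and vp: "v p = 1"
    and spl1: "spl \<Longrightarrow> e = 0 \<and> 1 + b \<in> OFunits v"
    and spl2: "\<not> spl \<Longrightarrow> e \<in> OFunits v \<and> 1 - 4 * e \<in> OFunits v \<and> \<not> (\<exists>u\<in>OFunits v. u * u = 1 - 4 * e)"
    and n3: "3 \<le> n"
    and Rdef: "R = p ^ (n div 2)" and Sdef: "S = p ^ ((n - 1) div 2)"
    and pTU: "p = T * U" and STUW: "S = T * U * W" and RST: "R = T * T * U * W"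
    and aA: "a = T * U * A"
    and A0: "A \<in> Iv v 0" and T0: "T \<in> Iv v 0" and U0: "U \<in> Iv v 0" and W0: "W \<in> Iv v 0"
    and b0: "b \<in> Iv v 0" and e0: "e \<in> Iv v 0"
begin

lemmas I0_rules = I_add I_diff I_uminus I_numeral I_1 I_0 I_pow[where k=0, simplified]
  I_mult[where k=0 and j=0, simplified]

lemma memO: "Q y0 y1 y2 y3 \<in> bass_order v p a b n \<longleftrightarrow>
   y0 \<in> Iv v 0 \<and> y2 \<in> Iv v 0 \<and> (\<exists>c2\<in>Iv v 0. y1 - a * y2 = c2 * R) \<and> (\<exists>c3\<in>Iv v 0. y3 - b * y2 = c3 * S)"
  (is "_ \<longleftrightarrow> ?R")
proof -
  have "Q y0 y1 y2 y3 \<in> bass_order v p a b n \<longleftrightarrow>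
    (\<exists>c0 c1 c2 c3. Q y0 y1 y2 y3 = Q c0 (c1 * a + c2 * R) c1 (c1 * b + c3 * S) \<and>
       c0 \<in> Iv v 0 \<and> c1 \<in> Iv v 0 \<and> c2 \<in> Iv v 0 \<and> c3 \<in> Iv v 0)"
    unfolding bass_order_def xab_def qone_def qx1_def qx2_def qx3_def OF_eq Rdef[symmetric] Sdef[symmetric]
    by (simp add: algebra_simps)
  also have "\<dots> \<longleftrightarrow> ?R"
  proof
    assume "\<exists>c0 c1 c2 c3. Q y0 y1 y2 y3 = Q c0 (c1 * a + c2 * R) c1 (c1 * b + c3 * S) \<and>
       c0 \<in> Iv v 0 \<and> c1 \<in> Iv v 0 \<and> c2 \<in> Iv v 0 \<and> c3 \<in> Iv v 0"
    then obtain c0 c1 c2 c3 where h: "y0 = c0" "y1 = c1 * a + c2 * R" "y2 = c1" "y3 = c1 * b + c3 * S"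
      "c0 \<in> Iv v 0" "c1 \<in> Iv v 0" "c2 \<in> Iv v 0" "c3 \<in> Iv v 0" by auto
    have "y1 - a * y2 = c2 * R" "y3 - b * y2 = c3 * S" using h by (simp_all add: algebra_simps)
    then show ?R using h by blast
  next
    assume ?R
    then obtain c2 c3 where h: "y0 \<in> Iv v 0" "y2 \<in> Iv v 0" "c2 \<in> Iv v 0" "y1 - a * y2 = c2 * R"
      "c3 \<in> Iv v 0" "y3 - b * y2 = c3 * S" by blast
    have "Q y0 y1 y2 y3 = Q y0 (y2 * a + c2 * R) y2 (y2 * b + c3 * S)"
      using h(4,6) by (simp add: algebra_simps)
    then show "\<exists>c0 c1 c2 c3. Q y0 y1 y2 y3 = Q c0 (c1 * a + c2 * R) c1 (c1 * b + c3 * S) \<and>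
       c0 \<in> Iv v 0 \<and> c1 \<in> Iv v 0 \<and> c2 \<in> Iv v 0 \<and> c3 \<in> Iv v 0" using h by blast
  qed
  finally show ?thesis .
qed

lemma memO_scaled:
  assumes "lam \<noteq> 0" "y0 = lam * P0" "y2 = lam * P2" "y1 - a * y2 = lam * (R * P1)" "y3 - b * y2 = lam * (S * P3)"
    "P0 \<in> Iv v 0" "P1 \<in> Iv v 0" "P2 \<in> Iv v 0" "P3 \<in> Iv v 0"
  shows "qscal (inverse lam) (Q y0 y1 y2 y3) \<in> bass_order v p a b n"
proof -
  have "qscal (inverse lam) (Q y0 y1 y2 y3) = Q P0 (inverse lam * y1) P2 (inverse lam * y3)"
    using assms by simp
  moreover have "inverse lam * y1 - a * P2 = P1 * R"
  proof -
    have "y1 = lam * (R * P1) + a * y2" using assms(4) by (simp add: algebra_simps)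
    then show ?thesis using assms(1,3) by (simp add: field_simps)
  qed
  moreover have "inverse lam * y3 - b * P2 = P3 * S"
  proof -
    have "y3 = lam * (S * P3) + b * y2" using assms(5) by (simp add: algebra_simps)
    then show ?thesis using assms(1,3) by (simp add: field_simps)
  qed
  ultimately show ?thesis using assms by (simp only: memO) blast
qed

lemma memO_1:
  assumes "y0 = P0" "y2 = P2" "y1 - a * y2 = R * P1" "y3 - b * y2 = S * P3"
    "P0 \<in> Iv v 0" "P1 \<in> Iv v 0" "P2 \<in> Iv v 0" "P3 \<in> Iv v 0"
  shows "Q y0 y1 y2 y3 \<in> bass_order v p a b n"
  using memO_scaled[of 1 y0 P0 y2 P2 y1 P1 y3 P3] assms by simp

lemma memO_1':
  assumes "y0 = Pa" "y2 = Pc" "y1 - a * y2 = R * Pb" "y3 - b * y2 = S * Pd"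
    "Pa \<in> Iv v 0" "Pb \<in> Iv v 0" "Pc \<in> Iv v 0" "Pd \<in> Iv v 0"
  shows "Q y0 y1 y2 y3 \<in> bass_order v p a b n"
  using memO_1 assms by blast

lemma test_xw:
  assumes c: "c0 \<in> Iv v 0" "c1 \<in> Iv v 0" "c2 \<in> Iv v 0" "c3 \<in> Iv v 0"
  shows "qmul e p (Q 0 a 1 b) (Q c0 (c1*a+c2*R) c1 (c1*b+c3*S)) \<in> bass_order v p a b n"
  unfolding qmul_Q
  apply (rule memO_1'[where Pa="((-1)*A*T^3*U^2*W*c2*e + (-1)*A^2*T^2*U^2*c1*e + T*U*b*c1 + T*U*b^2*c1*e + T*U*c1 + T^2*U^2*W*b*c3*e + T^2*U^2*W*c3)"
     and Pc="(A*T*U*c1 + (-1)*A*T^2*U^2*W*c3*e + T^2*U*W*b*c2*e + T^2*U*W*c2 + c0)"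
     and Pb="((-1)*A*T*U*b*c2*e + A^2*T*U^2*c3*e + (-1)*U*c3)"
     and Pd="(A*T*U*b*c3*e + A*T*U*c3 + (-1)*T*b*c2 + (-1)*T*b^2*c2*e + (-1)*T*c2)"])
  apply (simp only: pTU aA RST STUW; algebra)+
  apply (use c A0 T0 U0 W0 b0 e0 in \<open>simp add: I0_rules\<close>)+
  done

end

lemma quat_cases4: "(\<And>a0 a1 a2 a3. x = Q a0 a1 a2 a3 \<Longrightarrow> P) \<Longrightarrow> P"
  by (cases x) auto

lemma qmul_assoc: "qmul e p (qmul e p x y) z = qmul e p x (qmul e p y (z::'a::field quat))"
  by (cases x; cases y; cases z) (simp add: qmul_Q algebra_simps)

lemma qmul_qadd_right: "qmul e p x (qadd y z) = qadd (qmul e p x y) (qmul e p x (z::'a::field quat))"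
  by (cases x; cases y; cases z) (simp add: qmul_Q algebra_simps)

lemma qmul_qadd_left: "qmul e p (qadd x y) z = qadd (qmul e p x z) (qmul e p y (z::'a::field quat))"
  by (cases x; cases y; cases z) (simp add: qmul_Q algebra_simps)

lemma qmul_qscal_left: "qmul e p (qscal c x) y = qscal c (qmul e p x (y::'a::field quat))"
  by (cases x; cases y) (simp add: qmul_Q algebra_simps)

lemma qmul_qscal_right: "qmul e p x (qscal c y) = qscal c (qmul e p x (y::'a::field quat))"
  by (cases x; cases y) (simp add: qmul_Q algebra_simps)

lemma qmul_one_left: "qmul e p qone x = (x::'a::field quat)"
  by (cases x) (simp add: qmul_Q qone_def)

lemma qmul_one_right: "qmul e p x qone = (x::'a::field quat)"
  by (cases x) (simp add: qmul_Q qone_def)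

lemma qscal_qscal: "qscal c (qscal d x) = qscal (c * d) (x::'a::field quat)"
  by (cases x) (simp add: algebra_simps)

lemma qscal_qadd: "qscal c (qadd x y) = qadd (qscal c x) (qscal c (y::'a::field quat))"
  by (cases x; cases y) (simp add: algebra_simps)

lemma qscal_one: "qscal 1 x = (x::'a::field quat)"
  by (cases x) simp

lemma nrd_Q: "nrd e p (Q y0 y1 y2 y3) = y0*y0 + y0*y1 + e*y1*y1 - p*(y2*y2 + y2*y3 + e*y3*y3)"
  by (simp add: nrd_def qmul_Q algebra_simps)

lemma nrd_mult: "nrd e p (qmul e p x y) = nrd e p x * nrd e p (y::'a::field quat)"
  by (cases x; cases y) (simp add: nrd_Q qmul_Q algebra_simps)

lemma qconj_right: "qmul e p x (qconj x) = qscal (nrd e p x) (qone::'a::field quat)"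
  by (cases x) (simp add: nrd_Q qmul_Q qone_def algebra_simps)

lemma qconj_left: "qmul e p (qconj x) x = qscal (nrd e p x) (qone::'a::field quat)"
  by (cases x) (simp add: nrd_Q qmul_Q qone_def algebra_simps)

lemma nrd_one: "nrd e p (qone::'a::field quat) = 1"
  by (simp add: nrd_Q qone_def)

lemma nrd_qscal: "nrd e p (qscal c x) = c * c * nrd e p (x::'a::field quat)"
  by (cases x) (simp add: nrd_Q algebra_simps)

lemma qscal_Q_one: "qscal c qone = Q c 0 0 (0::'a::field)" by (simp add: qone_def)


context ctx
begin

lemma memO_p:
  assumes "y0 = p * Pa" "y2 = p * Pc" "y1 - a * y2 = p * (R * Pb)" "y3 - b * y2 = p * (S * Pd)"
    "Pa \<in> Iv v 0" "Pb \<in> Iv v 0" "Pc \<in> Iv v 0" "Pd \<in> Iv v 0"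
  shows "qscal (inverse p) (Q y0 y1 y2 y3) \<in> bass_order v p a b n"
  by (rule memO_scaled[OF pne assms(1,2,3,4,5,6,7,8)])

lemma memO_elim: assumes "w \<in> bass_order v p a b n"
  obtains c0 c1 c2 c3 where "w = Q c0 (c1*a+c2*R) c1 (c1*b+c3*S)"
    "c0 \<in> Iv v 0" "c1 \<in> Iv v 0" "c2 \<in> Iv v 0" "c3 \<in> Iv v 0"
proof -
  obtain y0 y1 y2 y3 where w: "w = Q y0 y1 y2 y3" by (cases w)
  then obtain c2 c3 where h: "y0 \<in> Iv v 0" "y2 \<in> Iv v 0" "c2 \<in> Iv v 0" "y1 - a * y2 = c2 * R"
      "c3 \<in> Iv v 0" "y3 - b * y2 = c3 * S" using assms memO by blast
  have "w = Q y0 (y2*a+c2*R) y2 (y2*b+c3*S)" using w h(4,6) by (simp add: algebra_simps)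
  then show ?thesis using that h by blast
qed

lemma I_m00: "x \<in> Iv v 0 \<Longrightarrow> y \<in> Iv v 0 \<Longrightarrow> x * y \<in> Iv v 0" using I_mult[of x 0 y 0] by simp
lemma I_m01: "x \<in> Iv v 0 \<Longrightarrow> y \<in> Iv v 1 \<Longrightarrow> x * y \<in> Iv v 1" using I_mult[of x 0 y 1] by simp
lemma I_m10: "x \<in> Iv v 1 \<Longrightarrow> y \<in> Iv v 0 \<Longrightarrow> x * y \<in> Iv v 1" using I_mult[of x 1 y 0] by simp
lemma I_m11: "x \<in> Iv v 1 \<Longrightarrow> y \<in> Iv v 1 \<Longrightarrow> x * y \<in> Iv v 2" using I_mult[of x 1 y 1] by simp
lemma I_m02: "x \<in> Iv v 0 \<Longrightarrow> y \<in> Iv v 2 \<Longrightarrow> x * y \<in> Iv v 2" using I_mult[of x 0 y 2] by simp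
lemma I_m20: "x \<in> Iv v 2 \<Longrightarrow> y \<in> Iv v 0 \<Longrightarrow> x * y \<in> Iv v 2" using I_mult[of x 2 y 0] by simp
lemma I_div2: "x \<in> Iv v k \<Longrightarrow> x / 2 \<in> Iv v k"
proof -
  assume "x \<in> Iv v k"
  then have "x * inverse 2 \<in> Iv v (k + 0)" using I_mult I_half[OF two] by blast
  then show ?thesis by (simp only: divide_inverse[symmetric]) simp
qed

lemma I_divu: assumes "u \<in> OFunits v" "x \<in> Iv v k" shows "x / u \<in> Iv v k"
proof -
  have "x * inverse u \<in> Iv v (k + 0)" using I_mult[OF assms(2) unit_I0[OF unit_inv[OF assms(1)]]] .
  then show ?thesis by (simp only: divide_inverse[symmetric]) simp
qed

lemma four_unit: "(4::'a) \<in> OFunits v" using unit_mult[OF two two] by simp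

lemma I_div4: "x \<in> Iv v k \<Longrightarrow> x / 4 \<in> Iv v k" by (rule I_divu[OF four_unit])

lemmas Irules = I_div4 I_add I_diff I_uminus I_numeral I_1 I_0 I_m00 I_m01 I_m10 I_m11 I_m02 I_m20 I_div2

lemma p1: "p \<in> Iv v 1" using vp by (simp add: Iv_def)
lemma p0: "p \<in> Iv v 0" using vp by (simp add: Iv_def)
lemma a1: "a \<in> Iv v 1" unfolding aA pTU[symmetric] using I_m10[OF p1 A0] by simp
lemma a0: "a \<in> Iv v 0" using I_mono[OF a1] by simp
lemma S1: "S \<in> Iv v 1" unfolding STUW pTU[symmetric] using I_m10[OF p1 W0] by simp
lemma S0: "S \<in> Iv v 0" using I_mono[OF S1] by simp
lemma R1: "R \<in> Iv v 1" using I_m10[OF S1 T0] RST STUW by (simp add: ac_simps)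
lemma R0: "R \<in> Iv v 0" using I_mono[OF R1] by simp
lemma Rne: "R \<noteq> 0" using pne Rdef by simp
lemma Sne: "S \<noteq> 0" using pne Sdef by simp
lemma two_ne: "(2::'a) \<noteq> 0" using two by (simp add: OFunits_def)

lemma m4e: "1 - 4 * e \<in> OFunits v"
  using spl1 spl2 by (cases spl) (auto simp: OFunits_def v1)

lemma m4e_ne: "1 - 4 * e \<noteq> 0" using m4e by (simp add: OFunits_def)

lemma not_sq_1m4e: "\<not> spl \<Longrightarrow> \<not> rsq (1 - 4 * e)"
proof
  assume ns: "\<not> spl" and "rsq (1 - 4 * e)"
  then obtain u where "u \<in> OFunits v" "u * u - (1 - 4 * e) \<in> Iv v 1" unfolding rsq_def by blast
  then obtain w where "w * w = 1 - 4 * e" "w \<in> OFunits v" using hensel_unit[OF comp two] by blast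
  then show False using spl2[OF ns] by blast
qed

definition Nt where "Nt = 1 + b + b * b * e"

lemma Nt_unit: "Nt \<in> OFunits v"
proof (cases spl)
  case True then show ?thesis unfolding Nt_def using spl1[OF True] by simp
next
  case False
  have eu: "e \<in> OFunits v" using spl2[OF False] by blast
  show ?thesis
  proof (rule ccontr)
    assume nu: "Nt \<notin> OFunits v"
    have N0: "Nt \<in> Iv v 0" unfolding Nt_def using b0 e0 by (simp add: Irules)
    then have N1: "Nt \<in> Iv v 1" using nu unit_iff by blast
    have bu: "b \<in> OFunits v"
    proof (rule ccontr)
      assume "b \<notin> OFunits v"
      then have b1: "b \<in> Iv v 1" using b0 unit_iff by blast
      have "Nt - 1 \<in> Iv v 1" unfolding Nt_def using b1 b0 e0 by (simp add: Irules)
      then have "1 \<in> Iv v 1" using I_diff[OF N1] by fastforce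
      then show False by (simp add: Iv_def v1)
    qed
    have id: "(2 + b) * (2 + b) - (1 - 4 * e) * (b * b) = 4 * Nt" by (simp add: Nt_def algebra_simps)
    have "4 * Nt \<in> Iv v 1" using N1 by (simp add: Irules)
    then have h1: "(2 + b) * (2 + b) - (1 - 4 * e) * (b * b) \<in> Iv v 1" using id by simp
    define z where "z = (2 + b) / b"
    have bne: "b \<noteq> 0" using bu by (simp add: OFunits_def)
    have "inverse (b*b) * ((2 + b) * (2 + b) - (1 - 4 * e) * (b * b)) \<in> Iv v 1"
      using unit_mult_I[OF unit_inv[OF unit_mult[OF bu bu]]] h1 by blast
    then have h2: "z * z - (1 - 4 * e) \<in> Iv v 1" using bne by (simp add: z_def field_simps)
    have zu: "z \<in> OFunits v"
    proof -
      have "z * z \<in> OFunits v"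
      proof (rule unit_cong[OF m4e])
        show "z * z - (1 - 4 * e) \<in> Iv v 1" by (rule h2)
      qed
      then have "z \<noteq> 0" "v z + v z = 0" by (auto simp: OFunits_def vmul)
      then show ?thesis by (simp add: OFunits_def)
    qed
    have "rsq (1 - 4 * e)" unfolding rsq_def using zu h2 by blast
    then show False using not_sq_1m4e[OF False] by simp
  qed
qed

lemma Nt0: "Nt \<in> Iv v 0" using Nt_unit unit_I0 by blast
lemma Nt_ne: "Nt \<noteq> 0" using Nt_unit by (simp add: OFunits_def)

lemma punit_v: assumes "u \<in> OFunits v" shows "p * u \<noteq> 0" "v (p * u) = 1"
  using assms pne vp by (auto simp: OFunits_def vmul)

lemma div_punit: assumes "x \<in> Iv v k" "u \<in> OFunits v" shows "x / (p * u) \<in> Iv v (k - 1)"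
proof -
  have "inverse (p * u) \<in> Iv v (- 1)" using I_inv[OF punit_v(1)[OF assms(2)]] punit_v(2)[OF assms(2)] by simp
  then have "x * inverse (p * u) \<in> Iv v (k + - 1)" using I_mult[OF assms(1)] by blast
  then show ?thesis by (simp only: divide_inverse[symmetric]) simp
qed

definition D where "D = a * a * e - p * Nt"
definition Dl where "Dl = a * a / 4 - D"
definition dd where "dd = A * a * e - Nt"
definition dl where "dl = Nt + A * a * (1 - 4 * e) / 4"

lemma D_eq: "D = p * dd" unfolding D_def dd_def using aA pTU by (simp add: algebra_simps)
lemma four_ne: "(4::'a) \<noteq> 0" using two_ne mult_eq_0_iff[of "2::'a" 2] by simp
lemma Dl_eq: "Dl = p * dl" unfolding Dl_def D_def dl_def using aA pTU four_ne by (simp add: field_simps)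

lemma dd_unit: "dd \<in> OFunits v"
proof -
  have "- Nt \<in> OFunits v" using unit_neg[OF Nt_unit] .
  moreover have "dd - (- Nt) \<in> Iv v 1" unfolding dd_def using A0 a1 e0 by (simp add: Irules)
  ultimately show ?thesis by (rule unit_cong)
qed

lemma dl_unit: "dl \<in> OFunits v"
proof -
  have "dl - Nt \<in> Iv v 1" unfolding dl_def using A0 a1 e0 by (simp add: Irules)
  then show ?thesis by (rule unit_cong[OF Nt_unit])
qed

lemma D_ne: "D \<noteq> 0" and vD: "v D = 1" using punit_v[OF dd_unit] D_eq by auto
lemma Dl_ne: "Dl \<noteq> 0" and vDl: "v Dl = 1" using punit_v[OF dl_unit] Dl_eq by auto

lemma x_in: "Q 0 a 1 b \<in> bass_order v p a b n"
  unfolding memO using a0 b0 by (auto intro!: bexI[of _ 0] simp: I_1)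

lemma xab_eq: "xab a b = Q 0 a 1 b"
  by (simp add: xab_def qx1_def qx2_def qx3_def)

lemma O_add: "w \<in> bass_order v p a b n \<Longrightarrow> z \<in> bass_order v p a b n \<Longrightarrow> qadd w z \<in> bass_order v p a b n"
proof -
  assume "w \<in> bass_order v p a b n" "z \<in> bass_order v p a b n"
  then obtain c0 c1 c2 c3 d0 d1 d2 d3 where w: "w = Q c0 (c1*a+c2*R) c1 (c1*b+c3*S)"
    "c0 \<in> Iv v 0" "c1 \<in> Iv v 0" "c2 \<in> Iv v 0" "c3 \<in> Iv v 0"
    and z: "z = Q d0 (d1*a+d2*R) d1 (d1*b+d3*S)"
    "d0 \<in> Iv v 0" "d1 \<in> Iv v 0" "d2 \<in> Iv v 0" "d3 \<in> Iv v 0" by (metis memO_elim)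
  show ?thesis unfolding w z qadd_Q
    by (rule memO_1'[where Pa="c0+d0" and Pc="c1+d1" and Pb="c2+d2" and Pd="c3+d3"]) (use w z in \<open>simp_all add: algebra_simps Irules\<close>)
qed

lemma O_scal: "w \<in> bass_order v p a b n \<Longrightarrow> k \<in> Iv v 0 \<Longrightarrow> qscal k w \<in> bass_order v p a b n"
proof -
  assume "w \<in> bass_order v p a b n" and k: "k \<in> Iv v 0"
  then obtain c0 c1 c2 c3 where w: "w = Q c0 (c1*a+c2*R) c1 (c1*b+c3*S)"
    "c0 \<in> Iv v 0" "c1 \<in> Iv v 0" "c2 \<in> Iv v 0" "c3 \<in> Iv v 0" by (metis memO_elim)
  show ?thesis unfolding w qscal_Q
    by (rule memO_1'[where Pa="k*c0" and Pc="k*c1" and Pb="k*c2" and Pd="k*c3"]) (use w k in \<open>simp_all add: algebra_simps Irules\<close>)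
qed

lemma one_in: "qone \<in> bass_order v p a b n"
  unfolding qone_def memO by (auto intro!: bexI[of _ 0] simp: I_1)

end

context ctx
begin
lemma xw_gen:
  assumes c: "c0 \<in> Iv v 0" "c1 \<in> Iv v 0" "c2 \<in> Iv v 0" "c3 \<in> Iv v 0"
  shows "qmul e p (Q 0 a 1 b) (Q c0 (c1*a+c2*R) c1 (c1*b+c3*S)) \<in> bass_order v p a b n"
  unfolding qmul_Q
  apply (rule memO_1'[where Pa="((-1)*A*T^3*U^2*W*c2*e + (-1)*A^2*T^2*U^2*c1*e + T*U*b*c1 + T*U*b^2*c1*e + T*U*c1 + T^2*U^2*W*b*c3*e + T^2*U^2*W*c3)"
     and Pb="((-1)*A*T*U*b*c2*e + A^2*T*U^2*c3*e + (-1)*U*c3)"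
     and Pc="(A*T*U*c1 + (-1)*A*T^2*U^2*W*c3*e + T^2*U*W*b*c2*e + T^2*U*W*c2 + c0)"
     and Pd="(A*T*U*b*c3*e + A*T*U*c3 + (-1)*T*b*c2 + (-1)*T*b^2*c2*e + (-1)*T*c2)"])
  apply (simp only: pTU aA RST STUW; algebra)+
  apply (use c A0 T0 U0 W0 b0 e0 in \<open>simp add: I0_rules\<close>)+
  done

lemma wx_gen:
  assumes c: "c0 \<in> Iv v 0" "c1 \<in> Iv v 0" "c2 \<in> Iv v 0" "c3 \<in> Iv v 0"
  shows "qmul e p (Q c0 (c1*a+c2*R) c1 (c1*b+c3*S)) (Q 0 a 1 b) \<in> bass_order v p a b n"
  unfolding qmul_Q
  apply (rule memO_1'[where Pa="((-1)*A*T^3*U^2*W*c2*e + (-1)*A^2*T^2*U^2*c1*e + T*U*b*c1 + T*U*b^2*c1*e + T*U*c1 + T^2*U^2*W*b*c3*e)"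
     and Pb="(A*T*U*b*c2*e + A*T*U*c2 + (-1)*A^2*T*U^2*c3*e + U*c3)"
     and Pc="(A*T*U*c1 + A*T^2*U^2*W*c3*e + (-1)*T^2*U*W*b*c2*e + c0)"
     and Pd="((-1)*A*T*U*b*c3*e + T*b*c2 + T*b^2*c2*e + T*c2)"])
  apply (simp only: pTU aA RST STUW; algebra)+
  apply (use c A0 T0 U0 W0 b0 e0 in \<open>simp add: I0_rules\<close>)+
  done

lemma xwx_gen:
  assumes c: "c0 \<in> Iv v 0" "c1 \<in> Iv v 0" "c2 \<in> Iv v 0" "c3 \<in> Iv v 0"
  shows "qscal (inverse p) (qmul e p (qmul e p (Q 0 a 1 b) (Q c0 (c1*a+c2*R) c1 (c1*b+c3*S))) (Q 0 a 1 b)) \<in> bass_order v p a b n"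
  unfolding qmul_Q
  apply (rule memO_p[where Pa="(A*T*U*b*c1 + A*T*U*b^2*c1*e + A*T*U*c1 + (-1)*A^2*T*U*c0*e + (-1)*A^2*T^3*U^2*W*c2*e + (-1)*A^3*T^2*U^2*c1*e + T^2*U*W*b*c2 + T^2*U*W*b^2*c2*e + T^2*U*W*c2 + b*c0 + b^2*c0*e + c0)"
     and Pb="(A^2*T*U*c2*e + (-1)*b*c2 + (-1)*b^2*c2*e + (-1)*c2)"
     and Pc="(A*T^2*U*W*c2 + (-2)*A*T^2*U*W*c2*e + A*c0 + A^2*T*U*c1 + (-1)*A^2*T*U*c1*e + (2)*T*U*W*b*c3*e + T*U*W*c3 + b*c1 + b^2*c1*e + c1)"
     and Pd="(A^2*T*U*c3*e + (-1)*b*c3 + (-1)*b^2*c3*e + (-1)*c3)"])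
  apply (simp only: pTU aA RST STUW; algebra)+
  apply (use c A0 T0 U0 W0 b0 e0 in \<open>simp add: I0_rules\<close>)+
  done

lemma g0wg0_gen:
  assumes c: "c0 \<in> Iv v 0" "c1 \<in> Iv v 0" "c2 \<in> Iv v 0" "c3 \<in> Iv v 0"
  shows "qscal (inverse p) (qmul e p (qmul e p (Q 0 0 (1+2*b*e) (-(b+2))) (Q c0 (c1*a+c2*R) c1 (c1*b+c3*S))) (Q 0 0 (1+2*b*e) (-(b+2)))) \<in> bass_order v p a b n"
  unfolding qmul_Q
  apply (rule memO_p[where Pa="((-1)*A*T*U*b*c1 + (4)*A*T*U*b*c1*e + (-1)*A*T*U*b^2*c1*e + (4)*A*T*U*b^2*c1*e^2 + (-1)*A*T*U*c1 + (4)*A*T*U*c1*e + (-1)*T^2*U*W*b*c2 + (4)*T^2*U*W*b*c2*e + (-1)*T^2*U*W*b^2*c2*e + (4)*T^2*U*W*b^2*c2*e^2 + (-1)*T^2*U*W*c2 + (4)*T^2*U*W*c2*e + (-1)*b*c0 + (4)*b*c0*e + (-1)*b^2*c0*e + (4)*b^2*c0*e^2 + (-1)*c0 + (4)*c0*e)"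
     and Pb="((-2)*A*U*b*c3*e + (8)*A*U*b*c3*e^2 + (-1)*A*U*c3 + (4)*A*U*c3*e + b*c2 + (-4)*b*c2*e + b^2*c2*e + (-4)*b^2*c2*e^2 + c2 + (-4)*c2*e)"
     and Pc="((2)*T*U*W*b*c3*e + (-8)*T*U*W*b*c3*e^2 + T*U*W*c3 + (-4)*T*U*W*c3*e + b*c1 + (-4)*b*c1*e + b^2*c1*e + (-4)*b^2*c1*e^2 + c1 + (-4)*c1*e)"
     and Pd="((-1)*b*c3 + (4)*b*c3*e + (-1)*b^2*c3*e + (4)*b^2*c3*e^2 + (-1)*c3 + (4)*c3*e)"])
  apply (simp only: pTU aA RST STUW; algebra)+
  apply (use c A0 T0 U0 W0 b0 e0 in \<open>simp add: I0_rules\<close>)+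
  done


lemma xw_in: "w \<in> bass_order v p a b n \<Longrightarrow> qmul e p (Q 0 a 1 b) w \<in> bass_order v p a b n"
  by (erule memO_elim) (hypsubst, rule xw_gen, assumption+)
lemma wx_in: "w \<in> bass_order v p a b n \<Longrightarrow> qmul e p w (Q 0 a 1 b) \<in> bass_order v p a b n"
  by (erule memO_elim) (hypsubst, rule wx_gen, assumption+)
lemma xwx_in: "w \<in> bass_order v p a b n \<Longrightarrow> qscal (inverse p) (qmul e p (qmul e p (Q 0 a 1 b) w) (Q 0 a 1 b)) \<in> bass_order v p a b n"
  by (erule memO_elim) (hypsubst, rule xwx_gen, assumption+)
lemma g0wg0_in: "w \<in> bass_order v p a b n \<Longrightarrow> qscal (inverse p) (qmul e p (qmul e p (Q 0 0 (1+2*b*e) (-(b+2))) w) (Q 0 0 (1+2*b*e) (-(b+2)))) \<in> bass_order v p a b n"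
  by (erule memO_elim) (hypsubst, rule g0wg0_gen, assumption+)

end

context ctx
begin

abbreviation "BO \<equiv> bass_order v p a b n"
abbreviation "xq \<equiv> Q 0 a 1 b"

definition mQ where "mQ y0 y1 = Q y0 (y1*a) y1 (y1*b)"
definition qf where "qf y0 y1 = y0*y0 + a*y0*y1 + D*y1*y1"

lemma nrd_mQ: "nrd e p (mQ y0 y1) = qf y0 y1"
  by (simp add: mQ_def qf_def nrd_Q D_def Nt_def algebra_simps)

lemma qconj_mQ: "qconj (mQ y0 y1) = mQ (y0 + a*y1) (-y1)"
  by (simp add: mQ_def algebra_simps)

lemma qf_conj: "qf (y0 + a*y1) (-y1) = qf y0 y1"
  by (simp add: qf_def algebra_simps)

lemma mQ_expand: "qmul e p (qmul e p (mQ y0 y1) w) (qconj (mQ y0 y1)) =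
  qadd (qadd (qscal (y0*(y0+a*y1)) w) (qscal (y1*(y0+a*y1)) (qmul e p xq w)))
       (qadd (qscal (-(y0*y1)) (qmul e p w xq)) (qscal (-(y1*y1)) (qmul e p (qmul e p xq w) xq)))"
  by (cases w) (simp add: mQ_def qmul_Q algebra_simps)

lemma mQ_x: "qmul e p (mQ y0 y1) xq = mQ (- y1 * D) (y0 + a*y1)"
  by (simp add: mQ_def qmul_Q D_def Nt_def algebra_simps)

lemma mQ_one: "qmul e p (mQ y0 y1) qone = mQ y0 y1" by (rule qmul_one_right)

lemma I_divI: assumes "x \<in> Iv v k" "y \<noteq> 0" shows "x / y \<in> Iv v (k - v y)"
proof -
  have "x * inverse y \<in> Iv v (k + - v y)" using I_mult[OF assms(1) I_inv[OF assms(2)]] .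
  then show ?thesis by (simp only: divide_inverse[symmetric]) simp
qed

lemma qcoef:
  assumes "(y0, y1) \<noteq> (0, 0)"
  shows "qf y0 y1 \<noteq> 0" "y0*(y0+a*y1) / qf y0 y1 \<in> Iv v 0" "y1*(y0+a*y1) / qf y0 y1 \<in> Iv v 0"
    "y0*y1 / qf y0 y1 \<in> Iv v 0" "p*(y1*y1) / qf y0 y1 \<in> Iv v 0"
proof -
  have "(y0 \<noteq> 0 \<and> (y1 = 0 \<or> v y0 \<le> v y1)) \<or> (y1 \<noteq> 0 \<and> (y0 = 0 \<or> v y1 < v y0))"
    using assms by auto
  then have "qf y0 y1 \<noteq> 0 \<and> y0*(y0+a*y1) / qf y0 y1 \<in> Iv v 0 \<and> y1*(y0+a*y1) / qf y0 y1 \<in> Iv v 0 \<and>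
    y0*y1 / qf y0 y1 \<in> Iv v 0 \<and> p*(y1*y1) / qf y0 y1 \<in> Iv v 0"
  proof
    assume h: "y0 \<noteq> 0 \<and> (y1 = 0 \<or> v y0 \<le> v y1)"
    define t where "t = y1 / y0"
    have y1t: "y1 = t * y0" using h by (simp add: t_def)
    have "y1 \<in> Iv v (v y0)" using h by (auto simp: Iv_def)
    then have t0: "t \<in> Iv v 0" using I_divI[of y1 "v y0" y0] h by (simp add: t_def)
    define den where "den = 1 + a*t + D*t*t"
    have D0: "D \<in> Iv v 0" unfolding D_eq using p0 dd_unit unit_I0 I_m00 by blast
    have D1: "D \<in> Iv v 1" unfolding D_eq using p1 dd_unit unit_I0 I_m10 by blast
    have "den - 1 \<in> Iv v 1" unfolding den_def using t0 a1 a0 D0 D1 by (simp add: Irules)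
    then have du: "den \<in> OFunits v" using unit_cong[of 1 den] by (simp add: OFunits_def v1)
    have dne: "den \<noteq> 0" using du by (simp add: OFunits_def)
    have qeq: "qf y0 y1 = y0 * y0 * den" unfolding qf_def den_def y1t by (simp add: algebra_simps)
    have qne: "qf y0 y1 \<noteq> 0" using qeq h dne by simp
    have e1: "y0*(y0+a*y1) / qf y0 y1 = (1 + a*t) / den" using h dne by (simp only: qeq, simp add: y1t field_simps)
    have e2: "y1*(y0+a*y1) / qf y0 y1 = t*(1 + a*t) / den" using h dne by (simp only: qeq, simp add: y1t field_simps)
    have e3: "y0*y1 / qf y0 y1 = t / den" using h dne by (simp only: qeq, simp add: y1t field_simps)
    have e4: "p*(y1*y1) / qf y0 y1 = p*(t*t) / den" using h dne by (simp only: qeq, simp add: y1t field_simps)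
    show ?thesis unfolding e1 e2 e3 e4 using qne
      using t0 a0 p0 by (simp add: Irules I_divu[OF du])
  next
    assume h: "y1 \<noteq> 0 \<and> (y0 = 0 \<or> v y1 < v y0)"
    define s where "s = y0 / y1"
    have y0s: "y0 = s * y1" using h by (simp add: s_def)
    have "y0 \<in> Iv v (v y1 + 1)" using h by (auto simp: Iv_def)
    then have s1: "s \<in> Iv v 1" using I_divI[of y0 "v y1 + 1" y1] h by (simp add: s_def)
    have s0: "s \<in> Iv v 0" using I_mono[OF s1] by simp
    define u where "u = dd + (s*s + a*s) / (p * 1)"
    have "s*s + a*s \<in> Iv v 2" using s1 a1 by (simp add: Irules)
    then have "(s*s + a*s) / (p * 1) \<in> Iv v (2 - 1)" by (rule div_punit) (simp add: OFunits_def v1)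
    then have "u - dd \<in> Iv v 1" by (simp add: u_def)
    then have uu: "u \<in> OFunits v" by (rule unit_cong[OF dd_unit])
    have une: "u \<noteq> 0" using uu by (simp add: OFunits_def)
    have den: "s*s + a*s + D = p * u" unfolding u_def D_eq using pne by (simp add: field_simps)
    have qeq: "qf y0 y1 = y1 * y1 * (p * u)" unfolding qf_def y0s den[symmetric] by (simp add: algebra_simps)
    have qne: "qf y0 y1 \<noteq> 0" using qeq h une pne by simp
    have e1: "y0*(y0+a*y1) / qf y0 y1 = s*(s + a) / (p * u)" using h une pne by (simp only: qeq, simp add: y0s field_simps)
    have e2: "y1*(y0+a*y1) / qf y0 y1 = (s + a) / (p * u)" using h une pne by (simp only: qeq, simp add: y0s field_simps)
    have e3: "y0*y1 / qf y0 y1 = s / (p * u)" using h une pne by (simp only: qeq, simp add: y0s field_simps)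
    have e4: "p*(y1*y1) / qf y0 y1 = p / (p * u)" using h une pne by (simp only: qeq, simp add: y0s field_simps)
    have r1: "s*(s + a) \<in> Iv v 2" using s1 a1 by (simp add: Irules)
    have r2: "s + a \<in> Iv v 1" using s1 a1 by (simp add: Irules)
    show ?thesis unfolding e1 e2 e3 e4 using qne
      using div_punit[OF r1 uu] div_punit[OF r2 uu] div_punit[OF s1 uu] div_punit[OF p1 uu]
      by (auto elim: I_mono)
  qed
  then show "qf y0 y1 \<noteq> 0" "y0*(y0+a*y1) / qf y0 y1 \<in> Iv v 0" "y1*(y0+a*y1) / qf y0 y1 \<in> Iv v 0"
    "y0*y1 / qf y0 y1 \<in> Iv v 0" "p*(y1*y1) / qf y0 y1 \<in> Iv v 0" by auto
qed

end

lemma conj_cancel: "qmul e p m h = qone \<Longrightarrow>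
  qmul e p (qmul e p m (qmul e p (qmul e p h z) m)) h = (z::'a::field quat)"
proof -
  assume mh: "qmul e p m h = qone"
  have "qmul e p (qmul e p m (qmul e p (qmul e p h z) m)) h = qmul e p (qmul e p (qmul e p m h) z) (qmul e p m h)"
    by (simp only: qmul_assoc)
  then show ?thesis by (simp add: mh qmul_one_left qmul_one_right)
qed

context ctx
begin

lemma conj_in:
  assumes ne: "(y0, y1) \<noteq> (0, 0)" and w: "w \<in> BO"
  shows "qscal (inverse (qf y0 y1)) (qmul e p (qmul e p (mQ y0 y1) w) (qconj (mQ y0 y1))) \<in> BO"
proof -
  let ?q = "qf y0 y1"
  have qne: "?q \<noteq> 0" using qcoef[OF ne] by blast
  have c1: "inverse ?q * (y0*(y0+a*y1)) = y0*(y0+a*y1) / ?q" by (simp add: divide_inverse mult.commute)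
  have c2: "inverse ?q * (y1*(y0+a*y1)) = y1*(y0+a*y1) / ?q" by (simp add: divide_inverse mult.commute)
  have c3: "inverse ?q * (-(y0*y1)) = - (y0*y1 / ?q)" by (simp add: divide_inverse mult.commute)
  have c4: "inverse ?q * (-(y1*y1)) = - (p*(y1*y1) / ?q) * inverse p" using pne qne by (simp add: field_simps)
  have h1: "qscal (inverse ?q) (qmul e p (qmul e p (mQ y0 y1) w) (qconj (mQ y0 y1))) =
    qadd (qadd (qscal (y0*(y0+a*y1) / ?q) w) (qscal (y1*(y0+a*y1) / ?q) (qmul e p xq w)))
       (qadd (qscal (- (y0*y1 / ?q)) (qmul e p w xq))
             (qscal (- (p*(y1*y1) / ?q)) (qscal (inverse p) (qmul e p (qmul e p xq w) xq))))"
    unfolding mQ_expand qscal_qadd qscal_qscal c1 c2 c3 c4 ..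
  have k3: "- (y0*y1 / ?q) \<in> Iv v 0" using qcoef(4)[OF ne] by simp
  have k4: "- (p*(y1*y1) / ?q) \<in> Iv v 0" using qcoef(5)[OF ne] by simp
  show ?thesis unfolding h1
    by (intro O_add O_scal w xw_in[OF w] wx_in[OF w] xwx_in[OF w] k3 k4 qcoef(2,3)[OF ne])
qed

lemma mQ_normalizer:
  assumes ne: "(y0, y1) \<noteq> (0, 0)"
  shows "mQ y0 y1 \<in> normalizer e p BO"
proof -
  let ?m = "mQ y0 y1" and ?q = "qf y0 y1"
  have qne: "?q \<noteq> 0" using qcoef[OF ne] by blast
  define h where "h = qscal (inverse ?q) (qconj ?m)"
  have mh: "qmul e p ?m h = qone"
    unfolding h_def qmul_qscal_right qconj_right nrd_mQ qscal_qscal using qne by (simp add: qscal_one)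
  have hm: "qmul e p h ?m = qone"
    unfolding h_def qmul_qscal_left qconj_left nrd_mQ qscal_qscal using qne by (simp add: qscal_one)
  have conj: "qmul e p (qmul e p ?m w) h = qscal (inverse ?q) (qmul e p (qmul e p ?m w) (qconj ?m))" for w
    unfolding h_def qmul_qscal_right ..
  have ne': "(y0 + a*y1, -y1) \<noteq> (0, 0)" using ne by auto
  have cc: "qconj (mQ (y0 + a*y1) (-y1)) = ?m" by (simp add: qconj_mQ)
  have img: "(\<lambda>w. qmul e p (qmul e p ?m w) h) ` BO = BO"
  proof (intro equalityI subsetI)
    fix z assume "z \<in> (\<lambda>w. qmul e p (qmul e p ?m w) h) ` BO"
    then obtain w where w: "w \<in> BO" "z = qmul e p (qmul e p ?m w) h" by blast
    show "z \<in> BO" unfolding w(2) conj using conj_in[OF ne w(1)] .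
  next
    fix z assume z: "z \<in> BO"
    define w where "w = qmul e p (qmul e p h z) ?m"
    have "w = qscal (inverse ?q) (qmul e p (qmul e p (mQ (y0 + a*y1) (-y1)) z) (qconj (mQ (y0 + a*y1) (-y1))))"
      unfolding w_def h_def by (simp add: qmul_qscal_left qconj_mQ)
    then have wO: "w \<in> BO" using conj_in[OF ne' z] qf_conj by simp
    have "qmul e p (qmul e p ?m w) h = z"
      unfolding w_def by (rule conj_cancel[OF mh])
    then show "z \<in> (\<lambda>w. qmul e p (qmul e p ?m w) h) ` BO" using wO by force
  qed
  show ?thesis unfolding normalizer_def using mh hm img by blast
qed

end

context ctx
begin

lemma qf_00: "qf 0 0 = 0" by (simp add: qf_def)

lemma subalg_eq: "subalg_M xq = {mQ c0 c1 | c0 c1. True}"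
  by (simp add: subalg_M_def mQ_def qone_def)

lemma coordM_mQ: "coordM xq (mQ c0 c1) = (c0, c1)"
  unfolding coordM_def
proof (rule the_equality)
  show "mQ c0 c1 = qadd (qscal (fst (c0, c1)) qone) (qscal (snd (c0, c1)) xq)" by (simp add: mQ_def qone_def)
next
  fix c assume "mQ c0 c1 = qadd (qscal (fst c) qone) (qscal (snd c) xq)"
  then show "c = (c0, c1)" by (cases c) (simp add: mQ_def qone_def)
qed

lemma normM_mQ: "normM e p xq (mQ c0 c1) = qf c0 c1"
  unfolding normM_def Let_def mQ_one mQ_x coordM_mQ by (simp add: qf_def algebra_simps)

lemma mQ_00: "mQ 0 0 = Q 0 0 0 0" by (simp add: mQ_def)

lemma units_M_eq: "units_M e p xq = {mQ c0 c1 | c0 c1. (c0, c1) \<noteq> (0, 0)}"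
proof (intro equalityI subsetI)
  fix y assume "y \<in> units_M e p xq"
  then obtain c0 c1 z where y: "y = mQ c0 c1" and z: "qmul e p y z = qone"
    unfolding units_M_def subalg_eq by blast
  have "(c0, c1) \<noteq> (0, 0)"
  proof
    assume "(c0, c1) = (0, 0)"
    then have "y = Q 0 0 0 0" using y mQ_00 by simp
    then show False using z by (cases z) (simp add: qmul_Q qone_def)
  qed
  then show "y \<in> {mQ c0 c1 | c0 c1. (c0, c1) \<noteq> (0, 0)}" using y by blast
next
  fix y assume "y \<in> {mQ c0 c1 | c0 c1. (c0, c1) \<noteq> (0, 0)}"
  then obtain c0 c1 where y: "y = mQ c0 c1" and ne: "(c0, c1) \<noteq> (0, 0)" by blast
  have qne: "qf c0 c1 \<noteq> 0" using qcoef[OF ne] by blast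
  define z where "z = mQ ((c0 + a*c1) / qf c0 c1) (- c1 / qf c0 c1)"
  have zq: "z = qscal (inverse (qf c0 c1)) (qconj (mQ c0 c1))"
    unfolding z_def qconj_mQ using qne by (simp add: mQ_def field_simps)
  have "qmul e p y z = qone"
    unfolding y zq qmul_qscal_right qconj_right nrd_mQ qscal_qscal using qne by (simp add: qscal_one)
  moreover have "y \<in> subalg_M xq" "z \<in> subalg_M xq" unfolding subalg_eq y z_def by blast+
  ultimately show "y \<in> units_M e p xq" unfolding units_M_def by blast
qed

definition NmS where "NmS = {qf c0 c1 | c0 c1. (c0, c1) \<noteq> (0, 0)}"

lemma normM_image: "normM e p xq ` units_M e p xq = NmS"
proof (intro equalityI subsetI)
  fix z assume "z \<in> normM e p xq ` units_M e p xq"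
  then obtain c0 c1 where "z = normM e p xq (mQ c0 c1)" "(c0, c1) \<noteq> (0, 0)" unfolding units_M_eq by blast
  then show "z \<in> NmS" unfolding NmS_def normM_mQ by blast
next
  fix z assume "z \<in> NmS"
  then obtain c0 c1 where "z = qf c0 c1" "(c0, c1) \<noteq> (0, 0)" unfolding NmS_def by blast
  then have "z = normM e p xq (mQ c0 c1)" "mQ c0 c1 \<in> units_M e p xq" unfolding units_M_eq normM_mQ by blast+
  then show "z \<in> normM e p xq ` units_M e p xq" by blast
qed

lemma NmS_ne: "x \<in> NmS \<Longrightarrow> x \<noteq> 0"
proof -
  assume "x \<in> NmS"
  then obtain c0 c1 where h: "x = qf c0 c1" "(c0, c1) \<noteq> (0, 0)" unfolding NmS_def by blast
  show "x \<noteq> 0" unfolding h(1) by (rule qcoef(1)[OF h(2)])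
qed

lemma NmS_I: "qf c0 c1 \<noteq> 0 \<Longrightarrow> qf c0 c1 \<in> NmS"
proof -
  assume h: "qf c0 c1 \<noteq> 0"
  have "(c0, c1) \<noteq> (0, 0)"
  proof
    assume "(c0, c1) = (0, 0)" then have "c0 = 0" "c1 = 0" by auto
    then show False using h qf_00 by simp
  qed
  then show ?thesis unfolding NmS_def by blast
qed

lemma NmS_mult: assumes "x \<in> NmS" "y \<in> NmS" shows "x * y \<in> NmS"
proof -
  obtain a1 b1 a2 b2 where x: "x = qf a1 b1" and y: "y = qf a2 b2"
    using assms unfolding NmS_def by blast
  have "x * y = qf (a1*a2 - D*b1*b2) (a1*b2 + b1*a2 + a*b1*b2)"
    unfolding x y qf_def by (simp add: algebra_simps)
  moreover have "x * y \<noteq> 0" using NmS_ne assms by simp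
  ultimately show ?thesis using NmS_I by metis
qed

lemma qf_scale: "qf (k * u) (k * w) = k * k * qf u w"
  by (simp add: qf_def algebra_simps)

lemma NmS_inv: assumes "x \<in> NmS" shows "inverse x \<in> NmS"
proof -
  obtain c0 c1 where x: "x = qf c0 c1" using assms unfolding NmS_def by blast
  have xne: "x \<noteq> 0" using NmS_ne assms by simp
  have "qf (inverse x * (c0 + a*c1)) (inverse x * (- c1)) = inverse x * inverse x * qf (c0 + a*c1) (-c1)"
    by (rule qf_scale)
  also have "\<dots> = inverse x * inverse x * x" using qf_conj x by simp
  also have "\<dots> = inverse x" using xne by (simp add: mult.assoc)
  finally have "inverse x = qf (inverse x * (c0 + a*c1)) (inverse x * (- c1))" by simp
  moreover have "inverse x \<noteq> 0" using xne by simp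
  ultimately show ?thesis using NmS_I by metis
qed

lemma NmS_div: "x \<in> NmS \<Longrightarrow> y \<in> NmS \<Longrightarrow> x / y \<in> NmS"
  using NmS_mult[OF _ NmS_inv, of x y] by (simp only: divide_inverse)

lemma eight_ne: "(8::'a) \<noteq> 0" using two_ne four_ne mult_eq_0_iff[of "2::'a" 4] by simp

lemma NmS_Dl: assumes "w \<noteq> 0" shows "- Dl * (w * w) \<in> NmS"
proof -
  have "qf (- a * w / 2) w = - Dl * (w * w)"
    unfolding qf_def Dl_def using two_ne four_ne eight_ne by (simp add: field_simps)
  moreover have "- Dl * (w * w) \<noteq> 0" using Dl_ne assms by simp
  ultimately show ?thesis using NmS_I by metis
qed

lemma NmS_hensel: assumes "u \<in> OFunits v" "rsq u" shows "- Dl * u \<in> NmS"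
proof -
  obtain w0 where "w0 \<in> OFunits v" "w0 * w0 - u \<in> Iv v 1" using assms(2) unfolding rsq_def by blast
  then obtain w where w: "w * w = u" "w \<in> OFunits v" using hensel_unit[OF comp two] by blast
  have "w \<noteq> 0" using w(2) by (simp add: OFunits_def)
  then show ?thesis using NmS_Dl w(1) by metis
qed

definition g0 where "g0 = Q 0 0 (1+2*b*e) (-(b+2))"
definition gam where "gam = - (p * ((1 - 4*e) * Nt))"

lemma g0g0: "qmul e p g0 g0 = qscal gam qone"
  by (simp add: g0_def gam_def qmul_Q qone_def Nt_def algebra_simps)

lemma nrd_g0: "nrd e p g0 = p * ((1 - 4*e) * Nt)"
  by (simp add: g0_def nrd_Q Nt_def algebra_simps)

lemma x_g0: "qmul e p xq g0 = qmul e p g0 (qconj xq)"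
  by (simp add: g0_def qmul_Q algebra_simps)

lemma gam_ne: "gam \<noteq> 0" unfolding gam_def using pne m4e_ne Nt_ne by simp

lemma g0_conj_in: assumes w: "w \<in> BO" shows "qscal (inverse gam) (qmul e p (qmul e p g0 w) g0) \<in> BO"
proof -
  have u: "(1 - 4*e) * Nt \<in> OFunits v" using unit_mult[OF m4e Nt_unit] .
  have k: "- inverse ((1 - 4*e) * Nt) \<in> Iv v 0" using unit_I0[OF unit_inv[OF u]] by simp
  have "inverse gam = - inverse ((1 - 4*e) * Nt) * inverse p" unfolding gam_def inverse_minus_eq inverse_mult_distrib
    by (simp add: mult.commute)
  then have "qscal (inverse gam) (qmul e p (qmul e p g0 w) g0) =
      qscal (- inverse ((1 - 4*e) * Nt)) (qscal (inverse p) (qmul e p (qmul e p g0 w) g0))"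
    by (simp add: qscal_qscal)
  then show ?thesis using O_scal[OF g0wg0_in[OF w, folded g0_def] k] by simp
qed

lemma g0_normalizer: "g0 \<in> normalizer e p BO"
proof -
  define h where "h = qscal (inverse gam) g0"
  have mh: "qmul e p g0 h = qone"
    unfolding h_def qmul_qscal_right g0g0 qscal_qscal using gam_ne by (simp add: qscal_one)
  have hm: "qmul e p h g0 = qone"
    unfolding h_def qmul_qscal_left g0g0 qscal_qscal using gam_ne by (simp add: qscal_one)
  have conj: "qmul e p (qmul e p g0 w) h = qscal (inverse gam) (qmul e p (qmul e p g0 w) g0)" for w
    unfolding h_def qmul_qscal_right ..
  have img: "(\<lambda>w. qmul e p (qmul e p g0 w) h) ` BO = BO"
  proof (intro equalityI subsetI)
    fix z assume "z \<in> (\<lambda>w. qmul e p (qmul e p g0 w) h) ` BO"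
    then obtain w where w: "w \<in> BO" "z = qmul e p (qmul e p g0 w) h" by blast
    show "z \<in> BO" unfolding w(2) conj using g0_conj_in[OF w(1)] .
  next
    fix z assume z: "z \<in> BO"
    define w where "w = qmul e p (qmul e p h z) g0"
    have "w = qscal (inverse gam) (qmul e p (qmul e p g0 z) g0)"
      unfolding w_def h_def by (simp add: qmul_qscal_left)
    then have wO: "w \<in> BO" using g0_conj_in[OF z] by simp
    have "qmul e p (qmul e p g0 w) h = z"
      unfolding w_def by (rule conj_cancel[OF mh])
    then show "z \<in> (\<lambda>w. qmul e p (qmul e p g0 w) h) ` BO" using wO by force
  qed
  show ?thesis unfolding normalizer_def using mh hm img by blast
qed

definition uu where "uu = - (p * ((1 - 4*e) * Nt)) / Dl"

lemma nrd_g0_uu: "nrd e p g0 = - Dl * uu"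
  unfolding nrd_g0 uu_def using Dl_ne by (simp add: field_simps)

lemma uu_cong: "uu - (- (1 - 4*e)) \<in> Iv v 1"
proof -
  have s2: "Dl - p * Nt = a * a * (1 - 4*e) / 4" unfolding Dl_def D_def using four_ne by (simp add: field_simps)
  have s1: "uu - (- (1 - 4*e)) = (1 - 4*e) * (Dl - p * Nt) / Dl"
    unfolding uu_def using Dl_ne by (simp add: field_simps)
  have "uu - (- (1 - 4*e)) = (1 - 4*e) * (a * a * (1 - 4*e) / 4) / Dl"
    by (simp only: s1 s2)
  then have "uu - (- (1 - 4*e)) = (1 - 4*e) * (a * a * (1 - 4*e) / 4) / (p * dl)"
    by (simp only: Dl_eq)
  moreover have X: "(1 - 4*e) * (a * a * (1 - 4*e) / 4) \<in> Iv v 2" using a1 e0 by (simp add: Irules)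
  have "(1 - 4*e) * (a * a * (1 - 4*e) / 4) / (p * dl) \<in> Iv v (2 - 1)" by (rule div_punit[OF X dl_unit])
  ultimately show ?thesis by simp
qed

lemma uu_unit: "uu \<in> OFunits v"
proof -
  have "- (1 - 4*e) \<in> OFunits v" using unit_neg[OF m4e] .
  then show ?thesis using unit_cong uu_cong by blast
qed

lemma g0_in_NmS: "rsq (- (1 - 4*e)) \<Longrightarrow> nrd e p g0 \<in> NmS"
  unfolding nrd_g0_uu by (rule NmS_hensel[OF uu_unit]) (erule rsq_cong, rule uu_cong)

end

lemma conj_mult_gen: "qmul e p h g = qone \<Longrightarrow>
  qmul e p (qmul e p (qmul e p g u) h) (qmul e p (qmul e p g w) h) = qmul e p (qmul e p g (qmul e p u w)) (h::'a::field quat)"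
proof -
  assume hg: "qmul e p h g = qone"
  have "qmul e p (qmul e p (qmul e p g u) h) (qmul e p (qmul e p g w) h) =
        qmul e p (qmul e p g (qmul e p u (qmul e p (qmul e p h g) w))) h"
    by (simp only: qmul_assoc)
  then show ?thesis by (simp add: hg qmul_one_left)
qed

lemma conj_add_gen: "qadd (qmul e p (qmul e p g u) h) (qmul e p (qmul e p g w) h) = qmul e p (qmul e p g (qadd u w)) (h::'a::field quat)"
  by (simp add: qmul_qadd_left qmul_qadd_right)

lemma conj_scal_gen: "qscal c (qmul e p (qmul e p g u) h) = qmul e p (qmul e p g (qscal c u)) (h::'a::field quat)"
  by (simp add: qmul_qscal_left qmul_qscal_right)

lemma conj_zero_gen: "qmul e p (qmul e p g (Q 0 0 0 0)) h = (Q 0 0 0 (0::'a::field))"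
  by (cases g; cases h) (simp add: qmul_Q)

context ctx
begin

definition Pz where "Pz z = qadd (qmul e p z z) (qadd (qscal (-a) z) (qscal D qone))"

lemma Pz_Q: "Pz (Q y0 y1 y2 y3) = Q ((2*y0 + y1 - a)*y0 + D - nrd e p (Q y0 y1 y2 y3))
   ((2*y0+y1-a)*y1) ((2*y0+y1-a)*y2) ((2*y0+y1-a)*y3)"
  by (simp add: Pz_def qmul_Q nrd_Q qone_def algebra_simps)

lemma nrd_x: "nrd e p xq = D" by (simp add: nrd_Q D_def Nt_def algebra_simps)

lemma Pz_x: "Pz xq = Q 0 0 0 0" by (simp add: Pz_Q nrd_x)

lemma Pz_conj: assumes gh: "qmul e p g h = qone" and hg: "qmul e p h g = qone"
  shows "Pz (qmul e p (qmul e p g u) h) = qmul e p (qmul e p g (Pz u)) h"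
proof -
  have one: "qscal D qone = qmul e p (qmul e p g (qscal D qone)) h"
    by (simp add: qmul_qscal_left qmul_qscal_right qmul_one_right gh)
  show ?thesis unfolding Pz_def
    by (subst one) (simp only: conj_mult_gen[OF hg] conj_scal_gen conj_add_gen)
qed

lemma zf_ident: "qmul e p (Q (a - y0) (-a - y1) (-1 - y2) (-b - y3)) (Q y0 y1 y2 y3) =
   qadd (qmul e p xq (Q (a - y0) (-a - y1) (-1 - y2) (-b - y3))) (qscal (-1) (Pz (Q y0 y1 y2 y3)))"
  by (simp add: Pz_Q qmul_Q nrd_Q D_def Nt_def algebra_simps)

lemma ymx_ident: "qmul e p (Q y0 (y1 - a) (y2 - 1) (y3 - b)) (Q y0 y1 y2 y3) =
   qadd (qmul e p (qconj xq) (Q y0 (y1 - a) (y2 - 1) (y3 - b))) (Pz (Q y0 y1 y2 y3))"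
  by (simp add: Pz_Q qmul_Q nrd_Q D_def Nt_def algebra_simps)

lemma centralizer: assumes "qmul e p (Q m0 m1 m2 m3) xq = qmul e p xq (Q m0 m1 m2 m3)"
  shows "Q m0 m1 m2 m3 = mQ m0 m2"
proof -
  from assms have e1: "p * (b*m2 - m3) = 0" and e2: "a*m2 + 2*a*e*m3 - 2*b*e*m1 - m1 = 0"
    and e3: "- 2*a*m2 - a*m3 + b*m1 + 2*m1 = 0"
    by (simp_all add: qmul_Q algebra_simps)
  have m3: "m3 = b * m2" using e1 pne by simp
  have f2: "(1 + 2*b*e) * (m1 - a*m2) = 0" using e2 m3 by (simp add: algebra_simps)
  have f3: "(2 + b) * (m1 - a*m2) = 0" using e3 m3 by (simp add: algebra_simps)
  have m1: "m1 = a * m2"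
  proof (rule ccontr)
    assume "m1 \<noteq> a * m2"
    then have h1: "1 + 2*b*e = 0" and h2: "2 + b = 0" using f2 f3 by auto
    have "b = (2 + b) - 2" by simp
    then have bb: "b = -2" using h2 by simp
    have "1 - 4*e = 1 + 2*b*e" unfolding bb by simp
    then show False using m4e_ne h1 by simp
  qed
  show ?thesis using m1 m3 by (simp add: mQ_def mult.commute)
qed

end

context ctx
begin

lemma four_Dl: "4 * Dl = a * a - 4 * D" unfolding Dl_def using four_ne by (simp add: field_simps)

lemma mDl: "- Dl = p * (- dl)" using Dl_eq by simp
lemma mdl_unit: "- dl \<in> OFunits v" using unit_neg[OF dl_unit] .

lemma near_m4Dl: assumes "X + 4 * Dl \<in> Iv v 2" shows "X \<in> NmS"
proof -
  define u where "u = X / (- Dl)"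
  have A0: "(X + 4 * Dl) / (p * (- dl)) \<in> Iv v (2 - 1)" by (rule div_punit[OF assms mdl_unit])
  have k: "(2::int) - 1 = 1" by simp
  have A: "(X + 4 * Dl) / (p * (- dl)) \<in> Iv v 1" using A0 unfolding k .
  have B: "u - 4 = (X + 4 * Dl) / (p * (- dl))" unfolding u_def mDl[symmetric] using Dl_ne
    by (simp add: field_simps)
  have u4: "u - 4 \<in> Iv v 1" by (subst B) (rule A)
  have uu: "u \<in> OFunits v" using unit_cong[OF four_unit u4] .
  have "rsq (2 * 2)" using rsq_sq[OF two] .
  then have "rsq 4" by simp
  then have ru: "rsq u" using rsq_cong u4 by blast
  have "- Dl * u \<in> NmS" by (rule NmS_hensel[OF uu ru])
  moreover have "- Dl * u = X" unfolding u_def using Dl_ne by simp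
  ultimately show ?thesis by simp
qed

lemma quad_nonzero: assumes c: "c \<in> Iv v 0" shows "c * c - a * c + D \<noteq> 0"
proof (cases "c \<in> Iv v 1")
  case True
  have D1: "D \<notin> Iv v 2" using D_ne vD by (simp add: Iv_def)
  show ?thesis
  proof
    assume h: "c * c - a * c + D = 0"
    have "c * c - a * c \<in> Iv v 2" using True a1 by (simp add: Irules)
    moreover have "D = - (c * c - a * c)" using h by (simp add: algebra_simps eq_neg_iff_add_eq_0)
    ultimately show False using D1 I_uminus by metis
  qed
next
  case False
  then have cu: "c \<in> OFunits v" using c unit_iff by blast
  have cc: "c * c \<noteq> 0" "v (c * c) = 0" using cu by (auto simp: OFunits_def vmul)
  have "D - a * c \<in> Iv v 1" using c a1 D_eq p1 dd_unit unit_I0 by (simp add: Irules)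
  then have "D - a * c = 0 \<or> v (c * c) < v (D - a * c)" using cc by (auto simp: Iv_def)
  then have "c * c + (D - a * c) \<noteq> 0" using vstrict[OF cc(1)] by blast
  then show ?thesis by (simp add: algebra_simps)
qed

lemma div_p: assumes "p * z \<in> Iv v (k + 1)" shows "z \<in> Iv v k"
proof -
  have "(p * z) / (p * 1) \<in> Iv v (k + 1 - 1)" by (rule div_punit[OF assms]) (simp add: OFunits_def v1)
  then show ?thesis using pne by simp
qed

lemma nrd_g_ne: assumes "qmul e p g h = qone" shows "nrd e p g \<noteq> 0"
proof
  assume "nrd e p g = 0"
  then have "nrd e p (qmul e p g h) = 0" by (simp add: nrd_mult)
  then have "nrd e p (qone::'a quat) = 0" using assms by simp
  then show False by (simp add: nrd_one)
qed

lemma qadd_zero_scal: "qadd w (qscal c (Q 0 0 0 0)) = w" by (cases w) simp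
lemma qadd_zero: "qadd w (Q 0 0 0 0) = w" by (cases w) simp

lemma main_incl:
  assumes g: "g \<in> normalizer e p BO" and C: "rsq (- (1 - 4*e))"
  shows "nrd e p g \<in> NmS"
proof -
  obtain h where gh: "qmul e p g h = qone" and hg: "qmul e p h g = qone"
    and img: "(\<lambda>y. qmul e p (qmul e p g y) h) ` BO = BO"
    using g unfolding normalizer_def by blast
  define y where "y = qmul e p (qmul e p g xq) h"
  have "y \<in> (\<lambda>y. qmul e p (qmul e p g y) h) ` BO" unfolding y_def using x_in by blast
  then have "y \<in> BO" using img by simp
  then obtain c0 c1 c2 c3 where yQ: "y = Q c0 (c1*a+c2*R) c1 (c1*b+c3*S)"
    and cs: "c0 \<in> Iv v 0" "c1 \<in> Iv v 0" "c2 \<in> Iv v 0" "c3 \<in> Iv v 0" by (rule memO_elim)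
  have Py: "Pz y = Q 0 0 0 0" unfolding y_def Pz_conj[OF gh hg] Pz_x by (rule conj_zero_gen)
  define tr where "tr = 2*c0 + (c1*a+c2*R)"
  define Ny where "Ny = nrd e p (Q c0 (c1*a+c2*R) c1 (c1*b+c3*S))"
  have "Pz (Q c0 (c1*a+c2*R) c1 (c1*b+c3*S)) = Q 0 0 0 0" using Py yQ by simp
  then have P0: "(tr - a)*c0 + D - Ny = 0" and P1: "(tr - a)*(c1*a+c2*R) = 0" and P2: "(tr-a)*c1 = 0"
    and P3: "(tr-a)*(c1*b+c3*S) = 0"
    unfolding Pz_Q tr_def Ny_def by simp_all
  have trA: "tr = a"
  proof (rule ccontr)
    assume ne: "tr \<noteq> a"
    then have z: "c1 = 0" "c1*a + c2*R = 0" "c1*b + c3*S = 0" using P1 P2 P3 by auto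
    then have "Ny = c0 * c0" unfolding Ny_def by (simp only: z(2) z(3)) (simp add: nrd_Q z(1))
    moreover have "tr = 2 * c0" using z unfolding tr_def by simp
    ultimately have "c0 * c0 - a * c0 + D = 0" using P0 by (simp add: algebra_simps)
    then show False using quad_nonzero[OF cs(1)] by simp
  qed
  have NyD: "Ny = D" using P0 trA by simp
  have c0_1: "c0 \<in> Iv v 1"
  proof -
    have "2 * c0 = a - c1 * a - c2 * R" using trA unfolding tr_def by (simp add: algebra_simps)
    moreover have "a - c1 * a - c2 * R \<in> Iv v 1" using a1 R1 cs by (simp add: Irules)
    ultimately have "(2 * c0) / 2 \<in> Iv v 1" using I_div2 by metis
    then show ?thesis using two_ne by simp
  qed
  have Eid: "Ny - D + p*((c1*c1 - 1)*Nt) = 2*R*a*c1*c2*e + R*c0*c2 + R*R*c2*c2*e - 2*S*b*c1*c3*e*p - S*c1*c3*p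
     - S*S*c3*c3*e*p + a*c0*c1 + a*a*c1*c1*e - a*a*e + c0*c0"
    unfolding Ny_def nrd_Q D_def Nt_def by (simp add: algebra_simps)
  have "2*R*a*c1*c2*e + R*c0*c2 + R*R*c2*c2*e - 2*S*b*c1*c3*e*p - S*c1*c3*p
     - S*S*c3*c3*e*p + a*c0*c1 + a*a*c1*c1*e - a*a*e + c0*c0 \<in> Iv v 2"
    using cs c0_1 a1 a0 R1 R0 S1 S0 p1 p0 b0 e0 by (simp add: Irules)
  then have "p*((c1*c1 - 1)*Nt) \<in> Iv v (1 + 1)" using Eid NyD by simp
  then have "(c1*c1 - 1)*Nt \<in> Iv v 1" by (rule div_p)
  then have "Nt * (c1*c1 - 1) \<in> Iv v 1" by (simp add: mult.commute)
  then have "c1*c1 - 1 \<in> Iv v 1" using unit_mult_I[OF Nt_unit] by blast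
  then have "(c1 - 1) * (c1 + 1) \<in> Iv v 1" by (simp add: algebra_simps)
  then have c1pm: "c1 - 1 \<in> Iv v 1 \<or> c1 + 1 \<in> Iv v 1"
    by (rule prime_I1[rotated 2]) (use cs in \<open>simp_all add: Irules\<close>)
  have yg: "qmul e p y g = qmul e p g xq" unfolding y_def by (simp add: qmul_assoc hg qmul_one_right)
  have gne: "nrd e p g \<noteq> 0" by (rule nrd_g_ne[OF gh])
  have FFI: "FF \<in> Iv v 2 \<Longrightarrow> 4 * (X + 4 * Dl) = FF \<Longrightarrow> X \<in> NmS" for X FF
  proof -
    assume "FF \<in> Iv v 2" "4 * (X + 4 * Dl) = FF"
    then have eq: "X + 4 * Dl = FF / 4" using four_ne by (simp add: field_simps)
    have "FF / 4 \<in> Iv v 2" using I_div4 \<open>FF \<in> Iv v 2\<close> by blast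
    then have "X + 4 * Dl \<in> Iv v 2" by (subst eq)
    then show ?thesis by (rule near_m4Dl)
  qed
  have aD: "a * a - 4 * D \<in> Iv v 1" using four_Dl[symmetric] Dl_eq p1 dl_unit unit_I0 by (simp add: Irules)
  from c1pm show ?thesis
  proof
    assume c1m: "c1 - 1 \<in> Iv v 1"
    define zq where "zq = Q (a - c0) (-a - (c1*a+c2*R)) (-1 - c1) (-b - (c1*b+c3*S))"
    have zy: "qmul e p zq y = qmul e p xq zq"
      using zf_ident[of c0 "c1*a+c2*R" c1 "c1*b+c3*S"] Py yQ unfolding zq_def by (simp add: qadd_zero_scal qadd_zero)
    define m where "m = qmul e p zq g"
    have "qmul e p m xq = qmul e p zq (qmul e p g xq)" unfolding m_def by (simp add: qmul_assoc)
    also have "\<dots> = qmul e p (qmul e p zq y) g" unfolding yg[symmetric] by (simp add: qmul_assoc)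
    also have "\<dots> = qmul e p xq m" unfolding zy m_def by (simp add: qmul_assoc)
    finally have comm: "qmul e p m xq = qmul e p xq m" .
    obtain m0 m1 m2 m3 where mQ4: "m = Q m0 m1 m2 m3" by (cases m)
    have mm: "m = mQ m0 m2" using centralizer comm mQ4 by simp
    have nm: "nrd e p m = nrd e p zq * nrd e p g" unfolding m_def by (rule nrd_mult)
    have "4 * nrd e p zq + 4 * (a*a - 4*D) - 4 * (Ny - D) =
       (- 2*(c1 - 1)*(a*a - 4*D) - 2*c2*R*a*(1 - 4*e) - 4*c3*S*p*(1 + 2*b*e)) + (tr - a) * (-2 * a)"
      unfolding zq_def Ny_def nrd_Q tr_def D_def Nt_def by (simp add: algebra_simps)
    then have I1: "4 * nrd e p zq + 4 * (a*a - 4*D) = - 2*(c1 - 1)*(a*a - 4*D) - 2*c2*R*a*(1 - 4*e) - 4*c3*S*p*(1 + 2*b*e)"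
      by (simp only: NyD trA diff_self mult_zero_left mult_zero_right diff_zero add_0_right)
    have "4 * (nrd e p zq + 4 * Dl) = 4 * nrd e p zq + 4 * (4 * Dl)" by (simp add: algebra_simps)
    then have "4 * (nrd e p zq + 4 * Dl) = - 2*(c1 - 1)*(a*a - 4*D) - 2*c2*R*a*(1 - 4*e) - 4*c3*S*p*(1 + 2*b*e)" unfolding four_Dl I1 .
    moreover have "- 2*(c1 - 1)*(a*a - 4*D) - 2*c2*R*a*(1 - 4*e) - 4*c3*S*p*(1 + 2*b*e) \<in> Iv v 2"
    proof -
      have eq: "2 - 2 * c1 = - (2 * (c1 - 1))" by (simp add: algebra_simps)
      have h: "- (2 * (c1 - 1)) \<in> Iv v 1" by (intro I_uminus I_m01 I_numeral c1m)
      have "2 - 2 * c1 \<in> Iv v 1" unfolding eq by (rule h)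
      then show ?thesis using c1m aD cs a1 R1 S1 p1 b0 e0 by (simp add: Irules)
    qed
    ultimately have zN: "nrd e p zq \<in> NmS" using FFI by blast
    have "nrd e p m \<noteq> 0" using nm NmS_ne[OF zN] gne by simp
    then have mN: "nrd e p m \<in> NmS" unfolding mm nrd_mQ by (rule NmS_I)
    have "nrd e p g = nrd e p m / nrd e p zq" using nm NmS_ne[OF zN] by simp
    then show ?thesis using NmS_div[OF mN zN] by simp
  next
    assume c1p: "c1 + 1 \<in> Iv v 1"
    define ymx where "ymx = Q c0 ((c1*a+c2*R) - a) (c1 - 1) ((c1*b+c3*S) - b)"
    have yy: "qmul e p ymx y = qmul e p (qconj xq) ymx"
      using ymx_ident[of c0 "c1*a+c2*R" c1 "c1*b+c3*S"] Py yQ unfolding ymx_def by (simp add: qadd_zero)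
    define m where "m = qmul e p (qmul e p g0 ymx) g"
    have "qmul e p m xq = qmul e p (qmul e p g0 ymx) (qmul e p g xq)" unfolding m_def by (simp add: qmul_assoc)
    also have "\<dots> = qmul e p (qmul e p g0 (qmul e p ymx y)) g" unfolding yg[symmetric] by (simp add: qmul_assoc)
    also have "\<dots> = qmul e p (qmul e p (qmul e p g0 (qconj xq)) ymx) g" unfolding yy by (simp add: qmul_assoc)
    also have "\<dots> = qmul e p xq m" unfolding x_g0[symmetric] m_def by (simp add: qmul_assoc)
    finally have comm: "qmul e p m xq = qmul e p xq m" .
    obtain m0 m1 m2 m3 where mQ4: "m = Q m0 m1 m2 m3" by (cases m)
    have mm: "m = mQ m0 m2" using centralizer comm mQ4 by simp
    have nm: "nrd e p m = (nrd e p g0 * nrd e p ymx) * nrd e p g" unfolding m_def by (simp add: nrd_mult)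
    have "4 * nrd e p ymx + 4 * (a*a - 4*D) - 4 * (Ny - D) =
       (2*(c1 + 1)*(a*a - 4*D) + 2*c2*R*a*(1 - 4*e) + 4*c3*S*p*(1 + 2*b*e)) + (tr - a) * (-2 * a)"
      unfolding ymx_def Ny_def nrd_Q tr_def D_def Nt_def by (simp add: algebra_simps)
    then have I1: "4 * nrd e p ymx + 4 * (a*a - 4*D) = 2*(c1 + 1)*(a*a - 4*D) + 2*c2*R*a*(1 - 4*e) + 4*c3*S*p*(1 + 2*b*e)"
      by (simp only: NyD trA diff_self mult_zero_left mult_zero_right diff_zero add_0_right)
    have "4 * (nrd e p ymx + 4 * Dl) = 4 * nrd e p ymx + 4 * (4 * Dl)" by (simp add: algebra_simps)
    then have "4 * (nrd e p ymx + 4 * Dl) = 2*(c1 + 1)*(a*a - 4*D) + 2*c2*R*a*(1 - 4*e) + 4*c3*S*p*(1 + 2*b*e)" unfolding four_Dl I1 .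
    moreover have "2*(c1 + 1)*(a*a - 4*D) + 2*c2*R*a*(1 - 4*e) + 4*c3*S*p*(1 + 2*b*e) \<in> Iv v 2"
    proof -
      have eq: "2 * c1 + 2 = 2 * (c1 + 1)" by (simp add: algebra_simps)
      have h: "2 * (c1 + 1) \<in> Iv v 1" by (intro I_m01 I_numeral c1p)
      have "2 * c1 + 2 \<in> Iv v 1" unfolding eq by (rule h)
      then show ?thesis using c1p aD cs a1 R1 S1 p1 b0 e0 by (simp add: Irules)
    qed
    ultimately have zN: "nrd e p ymx \<in> NmS" using FFI by blast
    have PN: "nrd e p g0 * nrd e p ymx \<in> NmS" using NmS_mult[OF g0_in_NmS[OF C] zN] .
    have "nrd e p m \<noteq> 0" using nm NmS_ne[OF PN] gne by simp
    then have mN: "nrd e p m \<in> NmS" unfolding mm nrd_mQ by (rule NmS_I)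
    have "nrd e p g = nrd e p m / (nrd e p g0 * nrd e p ymx)" using nm NmS_ne[OF PN] by simp
    then show ?thesis using NmS_div[OF mN PN] by simp
  qed
qed

end

context ctx
begin

lemma sixteen_ne: "(16::'a) \<noteq> 0" using four_ne mult_eq_0_iff[of "4::'a" 4] by simp

lemma g0_NmS_rsq: assumes "nrd e p g0 \<in> NmS" shows "rsq (- (1 - 4*e))"
proof -
  obtain c0 c1 where qc: "nrd e p g0 = qf c0 c1" and ne: "(c0, c1) \<noteq> (0, 0)"
    using assms unfolding NmS_def by blast
  define N0 where "N0 = nrd e p g0"
  have N0p: "N0 = p * (- (dl * uu))" unfolding N0_def nrd_g0_uu Dl_eq by simp
  have nu: "- (dl * uu) \<in> OFunits v" using unit_neg[OF unit_mult[OF dl_unit uu_unit]] .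
  have N0ne: "N0 \<noteq> 0" and vN0: "v N0 = 1" using punit_v[OF nu] N0p by auto
  define X where "X = c0 + a * c1 / 2"
  define Y where "Y = c1"
  have qXY: "N0 = X * X - Dl * (Y * Y)" unfolding N0_def qc X_def Y_def qf_def Dl_def
    using two_ne four_ne sixteen_ne by (simp add: field_simps)
  have vDl': "v (- Dl) = 1" using vDl by (simp add: vneg)
  have Dlne': "- Dl \<noteq> 0" using Dl_ne by simp
  show ?thesis
  proof (cases "Y = 0")
    case True
    then have "N0 = X * X" using qXY by simp
    then have "X \<noteq> 0" "v N0 = v X + v X" using N0ne by (auto simp: vmul)
    then have False using vN0 by presburger
    then show ?thesis ..
  next
    case Yne: False
    define Z where "Z = X / Y"
    have ZZ: "Z * Z + (- Dl) = N0 / (Y * Y)" unfolding Z_def qXY using Yne by (simp add: field_simps)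
    have vq: "v (N0 / (Y * Y)) = 1 - 2 * v Y" using N0ne Yne vN0 by (simp add: vdiv vmul)
    show ?thesis
    proof (cases "Z \<noteq> 0 \<and> v Z \<le> 0")
      case True
      have "Z * Z \<noteq> 0" "v (Z * Z) = 2 * v Z" using True by (auto simp: vmul)
      moreover have "- Dl = 0 \<or> v (Z * Z) < v (- Dl)" using True vDl' calculation by simp
      ultimately have "v (Z * Z + (- Dl)) = 2 * v Z" using vstrict[of "Z * Z" "- Dl"] by simp
      then have "2 * v Z = 1 - 2 * v Y" using ZZ vq by simp
      then have False by presburger
      then show ?thesis ..
    next
      case False
      then have Z1: "Z \<in> Iv v 1" by (auto simp: Iv_def)
      have ZZ2: "Z * Z \<in> Iv v 2" using Z1 by (simp add: Irules)
      then have "Z * Z = 0 \<or> v (- Dl) < v (Z * Z)" using vDl' by (auto simp: Iv_def)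
      then have "v (- Dl + Z * Z) = 1" using vstrict[OF Dlne', of "Z * Z"] vDl' by simp
      then have "1 - 2 * v Y = 1" using ZZ vq by (simp add: add.commute)
      then have vY: "v Y = 0" by simp
      have Yu: "Y \<in> OFunits v" using Yne vY by (simp add: OFunits_def)
      have Y0: "Y \<in> Iv v 0" using unit_I0[OF Yu] .
      have "uu = N0 / (- Dl)" unfolding N0_def nrd_g0_uu using Dl_ne by simp
      then have "Y * Y - uu = (Z * Z * (Y * Y)) / (p * dl)"
        unfolding Dl_eq[symmetric] using ZZ Yne Dl_ne by (simp add: field_simps)
      moreover have ZY: "Z * Z * (Y * Y) \<in> Iv v 2" using ZZ2 Y0 by (simp add: Irules)
      have k: "(2::int) - 1 = 1" by simp
      have "Z * Z * (Y * Y) / (p * dl) \<in> Iv v (2 - 1)" by (rule div_punit[OF ZY dl_unit])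
      then have "Z * Z * (Y * Y) / (p * dl) \<in> Iv v 1" unfolding k .
      ultimately have "Y * Y - uu \<in> Iv v 1" by simp
      then have "(Y * Y - uu) + (uu - (- (1 - 4*e))) \<in> Iv v 1" using uu_cong I_add by blast
      moreover have "(Y * Y - uu) + (uu - (- (1 - 4*e))) = Y * Y - (- (1 - 4*e))" by simp
      ultimately have "Y * Y - (- (1 - 4*e)) \<in> Iv v 1" by metis
      then show ?thesis unfolding rsq_def using Yu by blast
    qed
  qed
qed

lemma final_iff: "nrd e p ` normalizer e p BO = normM e p xq ` units_M e p xq \<longleftrightarrow> rsq (- (1 - 4*e))"
proof
  assume eq: "nrd e p ` normalizer e p BO = normM e p xq ` units_M e p xq"
  show "rsq (- (1 - 4*e))"
  proof (rule ccontr)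
    assume nC: "\<not> rsq (- (1 - 4*e))"
    have "nrd e p g0 \<in> normM e p xq ` units_M e p xq" using eq g0_normalizer by blast
    then have "nrd e p g0 \<in> NmS" using normM_image by simp
    then show False using g0_NmS_rsq nC by blast
  qed
next
  assume C: "rsq (- (1 - 4*e))"
  show "nrd e p ` normalizer e p BO = normM e p xq ` units_M e p xq"
    unfolding normM_image
  proof (intro equalityI subsetI)
    fix z assume "z \<in> nrd e p ` normalizer e p BO"
    then obtain g where "g \<in> normalizer e p BO" "z = nrd e p g" by blast
    then show "z \<in> NmS" using main_incl C by blast
  next
    fix z assume "z \<in> NmS"
    then obtain c0 c1 where z: "z = qf c0 c1" "(c0, c1) \<noteq> (0, 0)" unfolding NmS_def by blast
    have "mQ c0 c1 \<in> normalizer e p BO" by (rule mQ_normalizer[OF z(2)])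
    moreover have "z = nrd e p (mQ c0 c1)" using z nrd_mQ by simp
    ultimately show "z \<in> nrd e p ` normalizer e p BO" by blast
  qed
qed

lemma C_iff: "rsq (- (1 - 4*e)) \<longleftrightarrow> (spl \<and> rsq (-1)) \<or> (\<not> spl \<and> \<not> rsq (-1))"
proof (cases spl)
  case True
  then have "e = 0" using spl1 by blast
  then show ?thesis using True by simp
next
  case False
  have m1u: "(-1::'a) \<in> OFunits v" using unit_neg[of 1] by (simp add: OFunits_def v1)
  have ns: "\<not> rsq (1 - 4*e)" using not_sq_1m4e[OF False] .
  have "rsq (- (1 - 4*e)) \<longleftrightarrow> \<not> rsq (-1)"
  proof
    assume r: "rsq (- (1 - 4*e))"
    show "\<not> rsq (-1)"
    proof
      assume "rsq (-1)"
      then have "rsq ((-1) * (- (1 - 4*e)))"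
        using rsq_mult[OF _ r] unit_I0[OF m1u] unit_I0[OF unit_neg[OF m4e]] by blast
      then show False using ns by simp
    qed
  next
    assume "\<not> rsq (-1)"
    then have "rsq ((-1) * (1 - 4*e))" using nonsq_prod[OF m1u m4e _ ns] by blast
    then show "rsq (- (1 - 4*e))" by simp
  qed
  then show ?thesis using False by simp
qed

end


lemma TUW_exists:
  fixes p :: "'a::field" and n :: nat
  assumes n3: "3 \<le> n"
  shows "\<exists>T U W. (T = 1 \<or> T = p) \<and> (U = 1 \<or> U = p) \<and> (\<exists>k. W = p ^ k) \<and> p = T*U \<and>
     p^((n-1) div 2) = T*U*W \<and> p^(n div 2) = T*T*U*W"
proof (cases "even n")
  case True
  then obtain m where m: "n = 2 * m" by (metis evenE)
  then have m2: "m \<ge> 2" using n3 by simp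
  have h1: "(n - 1) div 2 = Suc (m - 2)" using m m2 by simp
  have h2: "n div 2 = Suc (Suc (m - 2))" using m m2 by simp
  have "(p = 1 \<or> p = p) \<and> (1 = 1 \<or> 1 = p) \<and> (\<exists>k. p^(m-2) = p ^ k) \<and> p = p*1 \<and>
     p^((n-1) div 2) = p*1*p^(m-2) \<and> p^(n div 2) = p*p*1*p^(m-2)"
    unfolding h1 h2 by auto
  then show ?thesis by blast
next
  case False
  then obtain m where m: "n = 2 * m + 1" by (metis oddE)
  then have m1: "m \<ge> 1" using n3 by simp
  have h1: "(n - 1) div 2 = Suc (m - 1)" using m m1 by simp
  have h2: "n div 2 = Suc (m - 1)" using m m1 by simp
  have "(1 = 1 \<or> 1 = p) \<and> (p = 1 \<or> p = p) \<and> (\<exists>k. p^(m-1) = p ^ k) \<and> p = 1*p \<and>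
     p^((n-1) div 2) = 1*p*p^(m-1) \<and> p^(n div 2) = 1*1*p*p^(m-1)"
    unfolding h1 h2 by auto
  then show ?thesis by blast
qed

theorem lemma3p6:
  fixes v :: "'a::field \<Rightarrow> int" and p e a b :: 'a and n :: nat
  assumes "nonarch_local_field v"
    and "nondyadic v"
    and "uniformizer v p"
    and "(quat_split e p \<and> e = 0) \<or>
         (\<not> quat_split e p \<and> e \<in> OFunits v \<and> 1 - 4 * e \<in> OFunits v \<and>
          \<not> (\<exists>u\<in>OFunits v. u * u = 1 - 4 * e))"
    and "3 \<le> n"
    and "a \<in> pid v" and "b \<in> OF v"
    and "quat_split e p \<longrightarrow> 1 + b \<in> OFunits v"
  shows "nrd e p ` normalizer e p (bass_order v p a b n)
           = normM e p (xab a b) ` units_M e p (xab a b)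
         \<longleftrightarrow> (quat_split e p \<and> residue_unit_square v (-1)) \<or>
             (\<not> quat_split e p \<and> \<not> residue_unit_square v (-1))"
proof -
  have dv: "dval v" and comp: "vcomplete v" and fres: "finite_residue v"
    using assms(1) unfolding nonarch_local_field_def by auto
  interpret vf: vfield v by unfold_locales (rule dv)
  have two: "(2::'a) \<in> OFunits v" using assms(2) unfolding nondyadic_def .
  have pne: "p \<noteq> 0" and vp: "v p = 1" using assms(3) unfolding uniformizer_def by auto
  have p0: "p \<in> Iv v 0" using vp by (simp add: Iv_def)
  obtain T U W where TUW: "T = 1 \<or> T = p" "U = 1 \<or> U = p" "\<exists>k. W = p ^ k" "p = T*U"
     "p^((n-1) div 2) = T*U*W" "p^(n div 2) = T*T*U*W"
    using TUW_exists[OF assms(5), of p] by blast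
  have T0: "T \<in> Iv v 0" and U0: "U \<in> Iv v 0" using TUW(1,2) p0 vf.I_1 by auto
  have W0: "W \<in> Iv v 0" using TUW(3) vf.I_pow[OF p0] by auto
  have a1: "a \<in> Iv v 1" using assms(6) vf.pid_eq by simp
  have "a * inverse p \<in> Iv v (1 + - v p)" using vf.I_mult[OF a1 vf.I_inv[OF pne]] .
  then have A0: "a / p \<in> Iv v 0" using vp by (simp add: divide_inverse)
  have aA: "a = T * U * (a / p)" using TUW(4) pne by simp
  have b0: "b \<in> Iv v 0" using assms(7) vf.OF_eq by simp
  have e0: "e \<in> Iv v 0" using assms(4) vf.unit_I0 by auto
  interpret c: ctx v p e a b n "p^(n div 2)" "p^((n-1) div 2)" T U W "a / p" "quat_split e p"
  proof (unfold_locales)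
    show "finite_residue v" by (rule fres)
    show "(2::'a) \<in> OFunits v" by (rule two)
    show "vcomplete v" by (rule comp)
    show "p \<noteq> 0" by (rule pne)
    show "v p = 1" by (rule vp)
    show "quat_split e p \<Longrightarrow> e = 0 \<and> 1 + b \<in> OFunits v" using assms(4,8) by blast
    show "\<not> quat_split e p \<Longrightarrow> e \<in> OFunits v \<and> 1 - 4 * e \<in> OFunits v \<and> \<not> (\<exists>u\<in>OFunits v. u * u = 1 - 4 * e)"
      using assms(4) by blast
    show "3 \<le> n" by (rule assms(5))
  qed (use TUW aA A0 T0 U0 W0 b0 e0 in auto)
  show ?thesis
    unfolding c.xab_eq c.final_iff c.C_iff vf.rsq_eq ..
qed


end
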